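(* Let $k\ge1$, let $\Lambda$ be a row-finite $k$-graph with no sources and $R$ a commutative ring with $1$. The following are equivalent: (1) $\mathrm{KP}_R(\Lambda)$ is commutative; (2) $r(\lambda)=s(\lambda)$ for all $\lambda\in\Lambda$, and for every $n\in\mathbb{N}^k$ the restriction of $r$ to $\Lambda^n$ is injective; (3) $\Lambda$ is isomorphic (as a $k$-graph) to the disjoint union $\bigsqcup_{v\in\Lambda^0}\mathbb{N}^k$ of copies of $\mathbb{N}^k$, where $\mathbb{N}^k$ is viewed as a $k$-graph with one object and degree map the identity; (4) $\mathrm{KP}_R(\Lambda)\cong\bigoplus_{v\in\Lambda^0}R[x_1,x_1^{-1},\ldots,x_k,x_k^{-1}]$ (Laurent polynomials in $k$ commuting indeterminates).
   Context: $\mathbb{N}^k$ is regarded as a category with one object, composition being addition. A $k$-graph is a countable category $\Lambda$ with a functor $d:\Lambda\to\mathbb{N}^k$ with unique factorization: whenever $d(\lambda)=m+n$ there are unique $\mu,\nu$ with $d(\mu)=m$, $d(\nu)=n$, $\lambda=\mu\nu$. Vertices (objects) are identified with degree-$0$ morphisms; $\Lambda^0$ is the vertex set, $\Lambda^n=d^{-1}(n)$, $r,s$ are range and source, $\lambda\mu$ is defined when $s(\lambda)=r(\mu)$; $v\Lambda^n=\{\lambda\in\Lambda^n:r(\lambda)=v\}$. Row-finite: each $v\Lambda^n$ is finite; no sources: each $v\Lambda^n$ is nonempty. With $\Lambda^{\neq0}$ the paths of nonzero degree and formal symbols $\lambda^*$, a Kumjian-Pask $\Lambda$-family in an $R$-algebra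 $A$ is $P:\Lambda^0\to A$, $S:\Lambda^{\neq0}\cup\{\lambda^*\}\to A$ with: (KP1) the $P_v$ are mutually orthogonal idempotents; (KP2) for $r(\mu)=s(\lambda)$: $S_\lambda S_\mu=S_{\lambda\mu}$, $S_{\mu^*}S_{\lambda^*}=S_{(\lambda\mu)^*}$, $P_{r(\lambda)}S_\lambda=S_\lambda=S_\lambda P_{s(\lambda)}$, $P_{s(\lambda)}S_{\lambda^*}=S_{\lambda^*}=S_{\lambda^*}P_{r(\lambda)}$; (KP3) $S_{\lambda^*}S_\mu=\delta_{\lambda,\mu}P_{s(\lambda)}$ when $d(\lambda)=d(\mu)$; (KP4) $P_v=\sum_{\lambda\in v\Lambda^n}S_\lambda S_{\lambda^*}$ for $n\neq0$. $\mathrm{KP}_R(\Lambda)$ is the $R$-algebra generated by a universal Kumjian-Pask $\Lambda$-family $(p,s)$ (every Kumjian-Pask family in an $R$-algebra is the image of $(p,s)$ under a unique $R$-algebra homomorphism). *)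

theory Defs
  imports Main "HOL-Library.Countable_Set" "HOL-Library.Function_Algebras"
begin

text \<open>A k-graph with morphisms (paths) of type 'a; objects are identified with their
identity morphisms. N^k is rendered as the function type 'k => nat with 'k a finite
(hence nonempty) type, so k = CARD('k) >= 1. Addition and 0 on degrees are pointwise.\<close>

record ('a, 'k) kgraph =
  paths :: "'a set"
  rng   :: "'a \<Rightarrow> 'a"
  src   :: "'a \<Rightarrow> 'a"
  cmp   :: "'a \<Rightarrow> 'a \<Rightarrow> 'a"
  deg   :: "'a \<Rightarrow> 'k \<Rightarrow> nat"

definition vertices :: "('a, 'k) kgraph \<Rightarrow> 'a set" where
  "vertices G = {v \<in> paths G. deg G v = 0}"

definition is_kgraph :: "('a, 'k) kgraph \<Rightarrow> bool" where
  "is_kgraph G \<longleftrightarrow>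
     countable (paths G) \<and>
     (\<forall>x\<in>paths G. rng G x \<in> paths G \<and> src G x \<in> paths G \<and>
        rng G (rng G x) = rng G x \<and> src G (rng G x) = rng G x \<and>
        rng G (src G x) = src G x \<and> src G (src G x) = src G x \<and>
        deg G (rng G x) = 0 \<and> deg G (src G x) = 0 \<and>
        cmp G (rng G x) x = x \<and> cmp G x (src G x) = x) \<and>
     (\<forall>x\<in>paths G. \<forall>y\<in>paths G. src G x = rng G y \<longrightarrow>
        cmp G x y \<in> paths G \<and> rng G (cmp G x y) = rng G x \<and>
        src G (cmp G x y) = src G y \<and> deg G (cmp G x y) = deg G x + deg G y) \<and>
     (\<forall>x\<in>paths G. \<forall>y\<in>paths G. \<forall>z\<in>paths G.
        src G x = rng G y \<longrightarrow> src G y = rng G z \<longrightarrow>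
        cmp G (cmp G x y) z = cmp G x (cmp G y z)) \<and>
     (\<forall>x\<in>paths G. \<forall>m n. deg G x = m + n \<longrightarrow>
        (\<exists>!p. fst p \<in> paths G \<and> snd p \<in> paths G \<and> src G (fst p) = rng G (snd p) \<and>
              deg G (fst p) = m \<and> deg G (snd p) = n \<and> cmp G (fst p) (snd p) = x))"

definition row_finite :: "('a, 'k) kgraph \<Rightarrow> bool" where
  "row_finite G \<longleftrightarrow> (\<forall>v\<in>vertices G. \<forall>n. finite {x \<in> paths G. deg G x = n \<and> rng G x = v})"

definition no_sources :: "('a, 'k) kgraph \<Rightarrow> bool" where
  "no_sources G \<longleftrightarrow> (\<forall>v\<in>vertices G. \<forall>n. {x \<in> paths G. deg G x = n \<and> rng G x = v} \<noteq> {})"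

definition kg_iso :: "('a, 'k) kgraph \<Rightarrow> ('b, 'k) kgraph \<Rightarrow> bool" where
  "kg_iso G H \<longleftrightarrow> (\<exists>\<phi>. bij_betw \<phi> (paths G) (paths H) \<and>
     (\<forall>x\<in>paths G. deg H (\<phi> x) = deg G x \<and> rng H (\<phi> x) = \<phi> (rng G x) \<and>
                   src H (\<phi> x) = \<phi> (src G x)) \<and>
     (\<forall>x\<in>paths G. \<forall>y\<in>paths G. src G x = rng G y \<longrightarrow>
                   \<phi> (cmp G x y) = cmp H (\<phi> x) (\<phi> y)))"

definition disj_union_Nk :: "'v set \<Rightarrow> ('v \<times> ('k \<Rightarrow> nat), 'k) kgraph" where
  "disj_union_Nk V = \<lparr> paths = V \<times> UNIV,
      rng = (\<lambda>(v, n). (v, 0)), src = (\<lambda>(v, n). (v, 0)),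
      cmp = (\<lambda>(v, n) (w, m). (v, n + m)), deg = snd \<rparr>"

text \<open>KP_R(Lambda) is realised as the free (non-unital) R-algebra on the generators
p_v (v a vertex), s_x, s_x* (x of nonzero degree), modulo the two-sided ideal generated
by the relations (KP1)-(KP4). Elements of the free algebra are finitely supported
functions from nonempty words over the generators to R.\<close>

datatype 'a kpgen = GP 'a | GS 'a | GSs 'a

definition kp_gens :: "('a, 'k) kgraph \<Rightarrow> 'a kpgen set" where
  "kp_gens G = GP ` vertices G \<union> GS ` {x \<in> paths G. deg G x \<noteq> 0}
                \<union> GSs ` {x \<in> paths G. deg G x \<noteq> 0}"

definition fa_carrier :: "'r itself \<Rightarrow> ('a, 'k) kgraph \<Rightarrow> ('a kpgen list \<Rightarrow> 'r::comm_ring_1) set" where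
  "fa_carrier R G = {f. finite {w. f w \<noteq> 0} \<and> f [] = 0 \<and>
                        (\<forall>w. f w \<noteq> 0 \<longrightarrow> set w \<subseteq> kp_gens G)}"

definition fa_mult :: "('g list \<Rightarrow> 'r::comm_ring_1) \<Rightarrow> ('g list \<Rightarrow> 'r) \<Rightarrow> 'g list \<Rightarrow> 'r" where
  "fa_mult f g = (\<lambda>w. \<Sum>i\<le>length w. f (take i w) * g (drop i w))"

definition fa_gen :: "'g \<Rightarrow> 'g list \<Rightarrow> 'r::comm_ring_1" where
  "fa_gen x = (\<lambda>w. if w = [x] then 1 else 0)"

definition kp_rels :: "'r itself \<Rightarrow> ('a, 'k) kgraph \<Rightarrow> ('a kpgen list \<Rightarrow> 'r::comm_ring_1) set" where
  "kp_rels R G =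
    \<comment> \<open>KP1\<close>
    {fa_mult (fa_gen (GP v)) (fa_gen (GP w)) - (if v = w then fa_gen (GP v) else 0)
       | v w. v \<in> vertices G \<and> w \<in> vertices G}
    \<comment> \<open>KP2\<close>
  \<union> {fa_mult (fa_gen (GS x)) (fa_gen (GS y)) - fa_gen (GS (cmp G x y))
       | x y. x \<in> paths G \<and> y \<in> paths G \<and> deg G x \<noteq> 0 \<and> deg G y \<noteq> 0 \<and> src G x = rng G y}
  \<union> {fa_mult (fa_gen (GSs y)) (fa_gen (GSs x)) - fa_gen (GSs (cmp G x y))
       | x y. x \<in> paths G \<and> y \<in> paths G \<and> deg G x \<noteq> 0 \<and> deg G y \<noteq> 0 \<and> src G x = rng G y}
  \<union> {fa_mult (fa_gen (GP (rng G x))) (fa_gen (GS x)) - fa_gen (GS x)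
       | x. x \<in> paths G \<and> deg G x \<noteq> 0}
  \<union> {fa_mult (fa_gen (GS x)) (fa_gen (GP (src G x))) - fa_gen (GS x)
       | x. x \<in> paths G \<and> deg G x \<noteq> 0}
  \<union> {fa_mult (fa_gen (GP (src G x))) (fa_gen (GSs x)) - fa_gen (GSs x)
       | x. x \<in> paths G \<and> deg G x \<noteq> 0}
  \<union> {fa_mult (fa_gen (GSs x)) (fa_gen (GP (rng G x))) - fa_gen (GSs x)
       | x. x \<in> paths G \<and> deg G x \<noteq> 0}
    \<comment> \<open>KP3\<close>
  \<union> {fa_mult (fa_gen (GSs x)) (fa_gen (GS y)) - (if x = y then fa_gen (GP (src G x)) else 0)
       | x y. x \<in> paths G \<and> y \<in> paths G \<and> deg G x \<noteq> 0 \<and> deg G y \<noteq> 0 \<and> deg G x = deg G y}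
    \<comment> \<open>KP4\<close>
  \<union> {fa_gen (GP v) - (\<Sum>x\<in>{x \<in> paths G. deg G x = n \<and> rng G x = v}.
                          fa_mult (fa_gen (GS x)) (fa_gen (GSs x)))
       | v n. v \<in> vertices G \<and> n \<noteq> 0}"

inductive_set kp_ideal :: "'r itself \<Rightarrow> ('a, 'k) kgraph \<Rightarrow> ('a kpgen list \<Rightarrow> 'r::comm_ring_1) set"
  for R :: "'r itself" and G :: "('a, 'k) kgraph" where
  rel: "f \<in> kp_rels R G \<Longrightarrow> f \<in> kp_ideal R G"
| zero: "0 \<in> kp_ideal R G"
| add: "f \<in> kp_ideal R G \<Longrightarrow> g \<in> kp_ideal R G \<Longrightarrow> f + g \<in> kp_ideal R G"
| smult: "f \<in> kp_ideal R G \<Longrightarrow> (\<lambda>w. c * f w) \<in> kp_ideal R G"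
| lmult: "f \<in> kp_ideal R G \<Longrightarrow> h \<in> fa_carrier R G \<Longrightarrow> fa_mult h f \<in> kp_ideal R G"
| rmult: "f \<in> kp_ideal R G \<Longrightarrow> h \<in> fa_carrier R G \<Longrightarrow> fa_mult f h \<in> kp_ideal R G"

definition kp_commutative :: "'r::comm_ring_1 itself \<Rightarrow> ('a, 'k) kgraph \<Rightarrow> bool" where
  "kp_commutative R G \<longleftrightarrow>
     (\<forall>f\<in>fa_carrier R G. \<forall>g\<in>fa_carrier R G. fa_mult f g - fa_mult g f \<in> kp_ideal R G)"

text \<open>R[x_1^{+-1},...,x_k^{+-1}]: finitely supported functions ('k => int) => R;
the direct sum over the vertices: finitely supported functions on vertices x Z^k.\<close>
definition lsum_carrier :: "'r itself \<Rightarrow> ('a, 'k) kgraph \<Rightarrow> ('a \<Rightarrow> ('k \<Rightarrow> int) \<Rightarrow> 'r::comm_ring_1) set" where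
  "lsum_carrier R G = {F. finite {(v, m). F v m \<noteq> 0} \<and>
                          (\<forall>v m. F v m \<noteq> 0 \<longrightarrow> v \<in> vertices G)}"

definition lsum_mult :: "('a \<Rightarrow> ('k \<Rightarrow> int) \<Rightarrow> 'r::comm_ring_1) \<Rightarrow> ('a \<Rightarrow> ('k \<Rightarrow> int) \<Rightarrow> 'r) \<Rightarrow> 'a \<Rightarrow> ('k \<Rightarrow> int) \<Rightarrow> 'r" where
  "lsum_mult F H = (\<lambda>v m. \<Sum>m1\<in>{m1. F v m1 \<noteq> 0}. F v m1 * H v (m - m1))"

text \<open>KP_R(Lambda) is isomorphic as an R-algebra to the direct sum; by the first
isomorphism theorem this is the existence of a surjective R-algebra homomorphism from
the free algebra onto the direct sum whose kernel is exactly the KP ideal.\<close>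
definition kp_laurent_iso :: "'r::comm_ring_1 itself \<Rightarrow> ('a, 'k) kgraph \<Rightarrow> bool" where
  "kp_laurent_iso R G \<longleftrightarrow> (\<exists>\<phi>.
     \<phi> ` fa_carrier R G = lsum_carrier R G \<and>
     (\<forall>f\<in>fa_carrier R G. \<forall>g\<in>fa_carrier R G. \<phi> (f + g) = \<phi> f + \<phi> g) \<and>
     (\<forall>c. \<forall>f\<in>fa_carrier R G. \<phi> (\<lambda>w. c * f w) = (\<lambda>v m. c * \<phi> f v m)) \<and>
     (\<forall>f\<in>fa_carrier R G. \<forall>g\<in>fa_carrier R G. \<phi> (fa_mult f g) = lsum_mult (\<phi> f) (\<phi> g)) \<and>
     (\<forall>f\<in>fa_carrier R G. \<phi> f = 0 \<longleftrightarrow> f \<in> kp_ideal R G))"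

end

theory Submission
  imports Defs
begin


lemma fun_add_diff_cancel: "(a + b) - a = (b :: 'k \<Rightarrow> nat)"
  by (simp add: fun_eq_iff)

lemma fun_le_add_diff: "(m :: 'k \<Rightarrow> nat) \<le> n \<Longrightarrow> m + (n - m) = n"
  by (simp add: fun_eq_iff le_fun_def)

lemma fun_le_add: "(m :: 'k \<Rightarrow> nat) \<le> m + n"
  by (simp add: le_fun_def)

lemma fun_diff_diff: "(n - m) - p = n - ((m::'k \<Rightarrow> nat) + p)"
  by (simp add: fun_eq_iff)

locale kg =
  fixes G :: "('a, 'k) kgraph"
  assumes kg: "is_kgraph G"
begin

abbreviation "P \<equiv> paths G"
abbreviation "r \<equiv> rng G"
abbreviation "s \<equiv> src G"
abbreviation "c \<equiv> cmp G"
abbreviation "d \<equiv> deg G"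

lemma r_in: "x \<in> P \<Longrightarrow> r x \<in> P" and s_in: "x \<in> P \<Longrightarrow> s x \<in> P"
  and rr: "x \<in> P \<Longrightarrow> r (r x) = r x" and sr: "x \<in> P \<Longrightarrow> s (r x) = r x"
  and rs: "x \<in> P \<Longrightarrow> r (s x) = s x" and ss: "x \<in> P \<Longrightarrow> s (s x) = s x"
  and dr: "x \<in> P \<Longrightarrow> d (r x) = 0" and ds: "x \<in> P \<Longrightarrow> d (s x) = 0"
  and cr: "x \<in> P \<Longrightarrow> c (r x) x = x" and cs: "x \<in> P \<Longrightarrow> c x (s x) = x"
  using kg unfolding is_kgraph_def by auto

lemma c_in: "x \<in> P \<Longrightarrow> y \<in> P \<Longrightarrow> s x = r y \<Longrightarrow> c x y \<in> P"
  and r_c: "x \<in> P \<Longrightarrow> y \<in> P \<Longrightarrow> s x = r y \<Longrightarrow> r (c x y) = r x"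
  and s_c: "x \<in> P \<Longrightarrow> y \<in> P \<Longrightarrow> s x = r y \<Longrightarrow> s (c x y) = s y"
  and d_c: "x \<in> P \<Longrightarrow> y \<in> P \<Longrightarrow> s x = r y \<Longrightarrow> d (c x y) = d x + d y"
  using kg unfolding is_kgraph_def by auto

lemma assoc: "x \<in> P \<Longrightarrow> y \<in> P \<Longrightarrow> z \<in> P \<Longrightarrow> s x = r y \<Longrightarrow> s y = r z \<Longrightarrow>
   c (c x y) z = c x (c y z)"
  using kg unfolding is_kgraph_def by blast

lemma ufact: "x \<in> P \<Longrightarrow> d x = m + n \<Longrightarrow>
  (\<exists>!p. fst p \<in> P \<and> snd p \<in> P \<and> s (fst p) = r (snd p) \<and>
              d (fst p) = m \<and> d (snd p) = n \<and> c (fst p) (snd p) = x)"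
  using kg unfolding is_kgraph_def by blast

definition split :: "'a \<Rightarrow> ('k \<Rightarrow> nat) \<Rightarrow> 'a \<times> 'a" where
  "split x m = (THE p. fst p \<in> P \<and> snd p \<in> P \<and> s (fst p) = r (snd p) \<and>
              d (fst p) = m \<and> d (snd p) = d x - m \<and> c (fst p) (snd p) = x)"

definition "pre x m = fst (split x m)"
definition "suf x m = snd (split x m)"

lemma split_props:
  assumes "x \<in> P" "m \<le> d x"
  shows "pre x m \<in> P" "suf x m \<in> P" "s (pre x m) = r (suf x m)" "d (pre x m) = m"
    "d (suf x m) = d x - m" "c (pre x m) (suf x m) = x"
proof -
  have "d x = m + (d x - m)" using assms(2) by (simp add: fun_le_add_diff)
  from theI'[OF ufact[OF assms(1) this]]
  show "pre x m \<in> P" "suf x m \<in> P" "s (pre x m) = r (suf x m)" "d (pre x m) = m"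
    "d (suf x m) = d x - m" "c (pre x m) (suf x m) = x"
    unfolding pre_def suf_def split_def by auto
qed

lemma split_unique:
  assumes "a \<in> P" "b \<in> P" "s a = r b"
  shows "pre (c a b) (d a) = a" "suf (c a b) (d a) = b"
proof -
  have x: "c a b \<in> P" and dx: "d (c a b) = d a + d b" using assms c_in d_c by auto
  have dd: "d (c a b) - d a = d b" using dx fun_add_diff_cancel by simp
  have u: "\<exists>!p. fst p \<in> P \<and> snd p \<in> P \<and> s (fst p) = r (snd p) \<and>
              d (fst p) = d a \<and> d (snd p) = d (c a b) - d a \<and> c (fst p) (snd p) = c a b"
    using ufact[OF x dx] unfolding dd .
  have "split (c a b) (d a) = (a, b)"
    unfolding split_def by (rule the1_equality[OF u]) (use assms dd in auto)
  then show "pre (c a b) (d a) = a" "suf (c a b) (d a) = b" unfolding pre_def suf_def by auto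
qed

lemma split_eq:
  assumes "a \<in> P" "b \<in> P" "s a = r b" "c a b = x"
  shows "pre x (d a) = a" "suf x (d a) = b"
  using split_unique assms by auto

lemma deg0: assumes "x \<in> P" "d x = 0" shows "r x = x"
proof -
  have "pre (c (r x) x) (d (r x)) = r x" using split_unique[of "r x" x] assms r_in sr by auto
  moreover have "pre (c x (s x)) (d x) = x" using split_unique[of x "s x"] assms s_in rs by auto
  ultimately show ?thesis using assms cr cs dr by simp
qed

lemma deg0s: assumes "x \<in> P" "d x = 0" shows "s x = x"
  using deg0[OF assms] assms sr by metis

lemma pre0: "a \<in> P \<Longrightarrow> pre a 0 = r a"
  using split_eq(1)[of "r a" a a] r_in sr cr dr by auto

lemma suf0: "a \<in> P \<Longrightarrow> suf a 0 = a"
  using split_eq(2)[of "r a" a a] r_in sr cr dr by auto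

lemma prefull: "a \<in> P \<Longrightarrow> pre a (d a) = a"
  using split_eq(1)[of a "s a" a] s_in rs cs by auto

lemma suffull: "a \<in> P \<Longrightarrow> suf a (d a) = s a"
  using split_eq(2)[of a "s a" a] s_in rs cs by auto

lemma r_pre: "a \<in> P \<Longrightarrow> m \<le> d a \<Longrightarrow> r (pre a m) = r a"
  using split_props[of a m] r_c by metis
lemma s_suf: "a \<in> P \<Longrightarrow> m \<le> d a \<Longrightarrow> s (suf a m) = s a"
  using split_props[of a m] s_c by metis

lemma pre_cmp:
  assumes "a \<in> P" "b \<in> P" "s a = r b" "m \<le> d a"
  shows "pre (c a b) m = pre a m" "suf (c a b) m = c (suf a m) b"
proof -
  note sp = split_props[OF assms(1,4)]
  have ss: "s (suf a m) = r b" using s_suf[OF assms(1,4)] assms(3) by simp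
  have "c a b = c (c (pre a m) (suf a m)) b" using sp(6) by simp
  also have "\<dots> = c (pre a m) (c (suf a m) b)"
    by (rule assoc) (use sp assms(2) ss in auto)
  finally have e: "c a b = c (pre a m) (c (suf a m) b)" .
  have i: "c (suf a m) b \<in> P" using c_in[OF sp(2) assms(2) ss] .
  have j: "s (pre a m) = r (c (suf a m) b)" using sp(3) r_c[OF sp(2) assms(2) ss] by simp
  show "pre (c a b) m = pre a m" "suf (c a b) m = c (suf a m) b"
    using split_eq[OF sp(1) i j e[symmetric]] sp(4) by auto
qed

lemma cmp_suf:
  assumes "a \<in> P" "b \<in> P" "s a = r b" "m \<le> d b"
  shows "pre (c a b) (d a + m) = c a (pre b m)" "suf (c a b) (d a + m) = suf b m"
proof -
  note sp = split_props[OF assms(2,4)]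
  have rr: "s a = r (pre b m)" using r_pre[OF assms(2,4)] assms(3) by simp
  have "c a b = c a (c (pre b m) (suf b m))" using sp(6) by simp
  also have "\<dots> = c (c a (pre b m)) (suf b m)"
    by (rule assoc[symmetric]) (use sp assms(1) rr in auto)
  finally have e: "c a b = c (c a (pre b m)) (suf b m)" .
  have i: "c a (pre b m) \<in> P" using c_in[OF assms(1) sp(1) rr] .
  have j: "s (c a (pre b m)) = r (suf b m)" using sp(3) s_c[OF assms(1) sp(1) rr] by simp
  have k: "d (c a (pre b m)) = d a + m" using sp(4) d_c[OF assms(1) sp(1) rr] by simp
  show "pre (c a b) (d a + m) = c a (pre b m)" "suf (c a b) (d a + m) = suf b m"
    using split_eq[OF i sp(2) j e[symmetric]] k by auto
qed

lemma prepre: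
  assumes "a \<in> P" "m \<le> n" "n \<le> d a"
  shows "pre (pre a n) m = pre a m"
proof -
  note sp = split_props[OF assms(1,3)]
  have "m \<le> d (pre a n)" using sp assms by simp
  then show ?thesis using pre_cmp(1)[of "pre a n" "suf a n" m] sp by simp
qed

lemma le_diff_fun: "(p::'k \<Rightarrow> nat) + q \<le> a \<Longrightarrow> q \<le> a - p"
  unfolding le_fun_def by (auto simp: le_fun_def) (metis add.commute le_diff_conv2 le_add2 order_trans)

lemma le_add_fun_left: "(p::'k \<Rightarrow> nat) + q \<le> a \<Longrightarrow> p \<le> a"
  using fun_le_add[of p q] order_trans by blast

lemma sufsuf:
  assumes "a \<in> P" "p + q \<le> d a"
  shows "suf (suf a p) q = suf a (p + q)"
proof -
  have pa: "p \<le> d a" using assms(2) le_add_fun_left by blast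
  note sp = split_props[OF assms(1) pa]
  have q: "q \<le> d (suf a p)" using sp(5) assms(2) le_diff_fun by simp
  have "suf (c (pre a p) (suf a p)) (d (pre a p) + q) = suf (suf a p) q"
    by (rule cmp_suf(2)) (use sp q in auto)
  then show ?thesis using sp by simp
qed

lemma mid:
  assumes "a \<in> P" "p + m \<le> d a"
  shows "pre (suf a p) m = suf (pre a (p + m)) p"
proof -
  have pa: "p \<le> d a" using assms(2) le_add_fun_left by blast
  note sp = split_props[OF assms(1) pa]
  have q: "m \<le> d (suf a p)" using sp(5) assms(2) le_diff_fun by simp
  have "pre (c (pre a p) (suf a p)) (d (pre a p) + m) = c (pre a p) (pre (suf a p) m)"
    by (rule cmp_suf(1)) (use sp q in auto)
  then have e: "pre a (p + m) = c (pre a p) (pre (suf a p) m)" using sp by simp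
  note sq = split_props[OF sp(2) q]
  have rr: "s (pre a p) = r (pre (suf a p) m)" using sp(3) r_pre[OF sp(2) q] by simp
  show ?thesis
    using split_eq(2)[OF sp(1) sq(1) rr e[symmetric]] sp(4) by simp
qed

end


context kg
begin

definition ipaths :: "(('k \<Rightarrow> nat) \<Rightarrow> 'a) set" where
  "ipaths = {x. (\<forall>n. x n \<in> P \<and> d (x n) = n) \<and> (\<forall>m n. m \<le> n \<longrightarrow> pre (x n) m = x m)}"

definition shift :: "('k \<Rightarrow> nat) \<Rightarrow> (('k \<Rightarrow> nat) \<Rightarrow> 'a) \<Rightarrow> ('k \<Rightarrow> nat) \<Rightarrow> 'a" where
  "shift p x = (\<lambda>n. suf (x (p + n)) p)"

definition ext :: "'a \<Rightarrow> (('k \<Rightarrow> nat) \<Rightarrow> 'a) \<Rightarrow> ('k \<Rightarrow> nat) \<Rightarrow> 'a" where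
  "ext l x = (\<lambda>n. pre (c l (x n)) n)"

lemma ipD: assumes "x \<in> ipaths" shows "x n \<in> P" "d (x n) = n" "m \<le> n \<Longrightarrow> pre (x n) m = x m"
  using assms unfolding ipaths_def by auto

lemma ip_r: assumes "x \<in> ipaths" shows "r (x n) = x 0"
  using ipD(3)[OF assms, of 0 n] pre0[OF ipD(1)[OF assms]] by simp

lemma decomp: assumes "x \<in> ipaths" shows "x (p + n) = c (x p) (shift p x n)"
  and "s (x p) = r (shift p x n)" and "shift p x n \<in> P"
proof -
  have le: "p \<le> d (x (p + n))" using ipD(2)[OF assms] fun_le_add by simp
  note sp = split_props[OF ipD(1)[OF assms] le]
  have "pre (x (p + n)) p = x p" using ipD(3)[OF assms, of p "p + n"] fun_le_add[of p n] by simp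
  then show "x (p + n) = c (x p) (shift p x n)" "s (x p) = r (shift p x n)" "shift p x n \<in> P"
    using sp unfolding shift_def by auto
qed

lemma shift_X: assumes "x \<in> ipaths" shows "shift p x \<in> ipaths"
proof -
  have le: "\<And>n. p \<le> d (x (p + n))" using ipD(2)[OF assms] fun_le_add by simp
  have a: "\<forall>n. shift p x n \<in> P \<and> d (shift p x n) = n"
    using split_props(2,5)[OF ipD(1)[OF assms] le] ipD(2)[OF assms] fun_add_diff_cancel
    unfolding shift_def by simp
  have b: "pre (shift p x n) m = shift p x m" if "m \<le> n" for m n
  proof -
    have pm: "p + m \<le> d (x (p + n))" using ipD(2)[OF assms] that by (simp add: add_left_mono)
    have "pre (shift p x n) m = suf (pre (x (p + n)) (p + m)) p"
      unfolding shift_def by (rule mid[OF ipD(1)[OF assms] pm])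
    also have "\<dots> = shift p x m" unfolding shift_def
      using ipD(3)[OF assms, of "p + m" "p + n"] that by (simp add: add_left_mono)
    finally show ?thesis .
  qed
  show ?thesis unfolding ipaths_def using a b by auto
qed

lemma shift0: assumes "x \<in> ipaths" shows "shift p x 0 = s (x p)"
  unfolding shift_def using suffull[OF ipD(1)[OF assms]] ipD(2)[OF assms] by simp

lemma ext_X: assumes "x \<in> ipaths" "l \<in> P" "s l = x 0" shows "ext l x \<in> ipaths"
proof -
  have sl: "\<And>n. s l = r (x n)" using ip_r[OF assms(1)] assms(3) by simp
  have cin: "\<And>n. c l (x n) \<in> P" using c_in[OF assms(2) ipD(1)[OF assms(1)] sl] .
  have dc: "\<And>n. d (c l (x n)) = d l + n" using d_c[OF assms(2) ipD(1)[OF assms(1)] sl] ipD(2)[OF assms(1)] by simp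
  have le: "\<And>n. n \<le> d (c l (x n))" using dc fun_le_add by (metis add.commute)
  have a: "\<forall>n. ext l x n \<in> P \<and> d (ext l x n) = n"
    using split_props(1,4)[OF cin le] unfolding ext_def by simp
  have b: "pre (ext l x n) m = ext l x m" if "m \<le> n" for m n
  proof -
    have "pre (ext l x n) m = pre (c l (x n)) m" unfolding ext_def
      by (rule prepre[OF cin that le])
    also have "x n = c (x m) (shift m x (n - m))"
      using decomp(1)[OF assms(1), of m "n - m"] fun_le_add_diff[OF that] by simp
    then have "c l (x n) = c (c l (x m)) (shift m x (n - m))"
      using assoc[OF assms(2) ipD(1)[OF assms(1)] decomp(3)[OF assms(1)] sl decomp(2)[OF assms(1)]]
      by simp
    then have "pre (c l (x n)) m = pre (c l (x m)) m"
      using pre_cmp(1)[OF cin decomp(3)[OF assms(1)] _ le, of m m "n - m"]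
        s_c[OF assms(2) ipD(1)[OF assms(1)] sl] decomp(2)[OF assms(1)] by simp
    finally show ?thesis unfolding ext_def .
  qed
  show ?thesis unfolding ipaths_def using a b by auto
qed

lemma ext0: assumes "x \<in> ipaths" "l \<in> P" "s l = x 0" shows "ext l x 0 = r l"
proof -
  have sl: "s l = r (x 0)" using ip_r[OF assms(1)] assms(3) by simp
  show ?thesis unfolding ext_def
    using pre0[OF c_in[OF assms(2) ipD(1)[OF assms(1)] sl]] r_c[OF assms(2) ipD(1)[OF assms(1)] sl] by simp
qed

lemma ext_dl: assumes "x \<in> ipaths" "l \<in> P" "s l = x 0" shows "ext l x (d l) = l"
proof -
  have sl: "s l = r (x (d l))" using ip_r[OF assms(1)] assms(3) by simp
  show ?thesis unfolding ext_def using split_unique(1)[OF assms(2) ipD(1)[OF assms(1)] sl] .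
qed

lemma shift_ext: assumes "x \<in> ipaths" "l \<in> P" "s l = x 0" shows "shift (d l) (ext l x) = x"
proof
  fix n
  have sl: "\<And>n. s l = r (x n)" using ip_r[OF assms(1)] assms(3) by simp
  have e1: "x (d l + n) = c (x n) (shift n x (d l))"
    using decomp(1)[OF assms(1), of n "d l"] by (simp add: add.commute)
  have sn: "s (c l (x n)) = r (shift n x (d l))"
    using s_c[OF assms(2) ipD(1)[OF assms(1)] sl] decomp(2)[OF assms(1)] by simp
  have "c l (x (d l + n)) = c (c l (x n)) (shift n x (d l))"
    unfolding e1 using assoc[OF assms(2) ipD(1)[OF assms(1)] decomp(3)[OF assms(1)] sl decomp(2)[OF assms(1)]] by simp
  then have "pre (c l (x (d l + n))) (d l + n) = c l (x n)"
    using split_unique(1)[OF c_in[OF assms(2) ipD(1)[OF assms(1)] sl] decomp(3)[OF assms(1)] sn]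
      d_c[OF assms(2) ipD(1)[OF assms(1)] sl] ipD(2)[OF assms(1)] by simp
  then show "shift (d l) (ext l x) n = x n"
    unfolding shift_def ext_def using split_unique(2)[OF assms(2) ipD(1)[OF assms(1)] sl] by simp
qed

lemma ext_shift: assumes "x \<in> ipaths" "x (d l) = l" shows "ext l (shift (d l) x) = x"
proof
  fix n
  have "ext l (shift (d l) x) n = pre (x (d l + n)) n"
    unfolding ext_def using decomp(1)[OF assms(1), of "d l" n] assms(2) by simp
  also have "\<dots> = x n" using ipD(3)[OF assms(1)] fun_le_add[of n "d l"] by (simp add: add.commute)
  finally show "ext l (shift (d l) x) n = x n" .
qed

lemma shift_shift: assumes "x \<in> ipaths" shows "shift q (shift p x) = shift (p + q) x"
proof
  fix n
  have le: "p + q \<le> d (x (p + (q + n)))" using ipD(2)[OF assms] fun_le_add[of "p + q" n]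
    by (simp add: add.assoc)
  show "shift q (shift p x) n = shift (p + q) x n"
    unfolding shift_def using sufsuf[OF ipD(1)[OF assms] le] by (simp add: add.assoc)
qed

lemma starts_iff:
  assumes "x \<in> ipaths" "l \<in> P" "m \<in> P" "s l = r m"
  shows "x (d l + d m) = c l m \<longleftrightarrow> x (d l) = l \<and> shift (d l) x (d m) = m"
proof
  assume h: "x (d l + d m) = c l m"
  have "x (d l) = pre (x (d l + d m)) (d l)" using ipD(3)[OF assms(1)] fun_le_add by metis
  then have a: "x (d l) = l" using h split_unique(1)[OF assms(2-4)] by simp
  have "shift (d l) x (d m) = suf (c l m) (d l)" unfolding shift_def h ..
  then show "x (d l) = l \<and> shift (d l) x (d m) = m" using a split_unique(2)[OF assms(2-4)] by simp
next
  assume "x (d l) = l \<and> shift (d l) x (d m) = m"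
  then show "x (d l + d m) = c l m" using decomp(1)[OF assms(1)] by simp
qed

lemma ext_ext:
  assumes "x \<in> ipaths" "l \<in> P" "m \<in> P" "s l = r m" "s m = x 0"
  shows "ext l (ext m x) = ext (c l m) x"
proof -
  have y: "ext m x \<in> ipaths" using ext_X[OF assms(1,3,5)] .
  have y0: "s l = ext m x 0" using ext0[OF assms(1,3,5)] assms(4) by simp
  define z where "z = ext l (ext m x)"
  have z: "z \<in> ipaths" unfolding z_def using ext_X[OF y assms(2) y0] .
  have zl: "z (d l) = l" unfolding z_def using ext_dl[OF y assms(2) y0] .
  have sz: "shift (d l) z = ext m x" unfolding z_def using shift_ext[OF y assms(2) y0] .
  have zlm: "z (d l + d m) = c l m"
    using starts_iff[OF z assms(2-4)] zl sz ext_dl[OF assms(1,3,5)] by simp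
  have dlm: "d (c l m) = d l + d m" using d_c[OF assms(2-4)] .
  have "shift (d (c l m)) z = x"
    unfolding dlm using shift_shift[OF z, where p="d l" and q="d m", symmetric] sz shift_ext[OF assms(1,3,5)] by simp
  then show ?thesis using ext_shift[OF z, of "c l m"] zlm dlm z_def by simp
qed


lemma path_exists:
  assumes fin: "finite (UNIV :: 'k set)"
    and ns: "\<And>w n. w \<in> P \<Longrightarrow> d w = 0 \<Longrightarrow> \<exists>e. e \<in> P \<and> d e = n \<and> r e = w"
    and v: "v \<in> P" "d v = 0"
  shows "\<exists>x\<in>ipaths. x 0 = v"
proof -
  define one :: "'k \<Rightarrow> nat" where "one = (\<lambda>_. 1)"
  define nxt where "nxt = (\<lambda>w. SOME e. e \<in> P \<and> d e = one \<and> r e = w)"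
  have nxt: "nxt w \<in> P \<and> d (nxt w) = one \<and> r (nxt w) = w" if "w \<in> P" "d w = 0" for w
    unfolding nxt_def by (rule someI_ex) (use ns[OF that] in auto)
  define y where "y = rec_nat v (\<lambda>j yj. c yj (nxt (s yj)))"
  have y0: "y 0 = v" and ySuc: "\<And>j. y (Suc j) = c (y j) (nxt (s (y j)))" unfolding y_def by auto
  have yp: "y j \<in> P \<and> d (y j) = (\<lambda>_. j) \<and> r (y j) = v" for j
  proof (induction j)
    case 0 then show ?case using y0 v deg0 by (auto simp: fun_eq_iff)
  next
    case (Suc j)
    then have sy: "s (y j) \<in> P" "d (s (y j)) = 0" using s_in ds by auto
    note nx = nxt[OF sy]
    have ss: "s (y j) = r (nxt (s (y j)))" using nx by simp
    show ?case unfolding ySuc using c_in[OF _ _ ss] d_c[OF _ _ ss] r_c[OF _ _ ss] nx Suc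
      by (auto simp: one_def fun_eq_iff)
  qed
  have ypre: "pre (y j') (\<lambda>_. j) = y j" if "j \<le> j'" for j j'
    using that
  proof (induction j')
    case 0 then show ?case using prefull[of "y 0"] yp[of 0] by auto
  next
    case (Suc j')
    show ?case
    proof (cases "j = Suc j'")
      case True then show ?thesis using prefull yp by (metis (no_types))
    next
      case False
      then have jj: "j \<le> j'" using Suc by simp
      have sy: "s (y j') \<in> P" "d (s (y j')) = 0" using s_in ds yp by auto
      note nx = nxt[OF sy]
      have ss: "s (y j') = r (nxt (s (y j')))" using nx by simp
      have le: "(\<lambda>_. j) \<le> d (y j')" using yp jj by (simp add: le_fun_def)
      show ?thesis unfolding ySuc using pre_cmp(1)[OF _ _ ss le] yp nx Suc.IH[OF jj] by simp
    qed
  qed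
  define N :: "('k \<Rightarrow> nat) \<Rightarrow> nat" where "N n = Max (range n)" for n
  have nN: "n \<le> (\<lambda>_. N n)" for n unfolding N_def le_fun_def using fin by auto
  have Nmono: "N m \<le> N n" if "m \<le> n" for m n
  proof -
    have "\<forall>i. m i \<le> N n" using that nN[of n] by (auto simp: le_fun_def intro: order_trans)
    then show ?thesis unfolding N_def[of m] using fin by (auto intro: Max.boundedI)
  qed
  define x where "x n = pre (y (N n)) n" for n
  have xd: "x n \<in> P \<and> d (x n) = n" for n
    unfolding x_def using split_props(1,4)[of "y (N n)" n] yp nN by auto
  have xc: "pre (x n) m = x m" if "m \<le> n" for m n
  proof -
    have a: "pre (x n) m = pre (y (N n)) m"
      unfolding x_def using prepre[of "y (N n)" m n] yp nN that by auto
    have "x m = pre (pre (y (N n)) (\<lambda>_. N m)) m"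
      unfolding x_def using ypre[OF Nmono[OF that]] by simp
    also have "\<dots> = pre (y (N n)) m"
      using prepre[of "y (N n)" m "\<lambda>_. N m"] yp nN Nmono[OF that] by (auto simp: le_fun_def)
    finally show ?thesis using a by simp
  qed
  have "x \<in> ipaths" unfolding ipaths_def using xd xc by auto
  moreover have "x 0 = v" unfolding x_def using pre0 yp by auto
  ultimately show ?thesis by blast
qed

end


definition wd :: "'g list \<Rightarrow> 'g list \<Rightarrow> 'r::comm_ring_1" where
  "wd u = (\<lambda>w. if w = u then 1 else 0)"

definition lin :: "('w \<Rightarrow> 'i \<Rightarrow> 'r) \<Rightarrow> ('w \<Rightarrow> 'r) \<Rightarrow> 'i \<Rightarrow> 'r::comm_ring_1" where
  "lin K f i = (\<Sum>w\<in>{w. f w \<noteq> 0}. f w * K w i)"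

lemma sum_fun_apply: "(\<Sum>l\<in>L. F l) w = (\<Sum>l\<in>L. F l w :: 'r::comm_monoid_add)"
  by (induction L rule: infinite_finite_induct) auto

lemma fa_gen_wd: "fa_gen g = wd [g]"
  unfolding fa_gen_def wd_def ..

lemma lin_super:
  assumes "finite S" "{w. f w \<noteq> 0} \<subseteq> S"
  shows "lin K f i = (\<Sum>w\<in>S. f w * K w i)"
  unfolding lin_def by (rule sum.mono_neutral_left) (use assms in auto)

lemma lin_add:
  assumes "finite {w. f w \<noteq> 0}" "finite {w. g w \<noteq> 0}"
  shows "lin K (f + g) i = lin K f i + lin K g i"
proof -
  let ?S = "{w. f w \<noteq> 0} \<union> {w. g w \<noteq> 0}"
  have "lin K (f + g) i = (\<Sum>w\<in>?S. (f + g) w * K w i)"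
    by (rule lin_super) (use assms in auto)
  also have "\<dots> = (\<Sum>w\<in>?S. f w * K w i) + (\<Sum>w\<in>?S. g w * K w i)"
    by (simp add: sum.distrib distrib_right)
  also have "\<dots> = lin K f i + lin K g i"
    using lin_super[of ?S f K i] lin_super[of ?S g K i] assms by auto
  finally show ?thesis .
qed

lemma lin_smult:
  assumes "finite {w. f w \<noteq> 0}"
  shows "lin K (\<lambda>w. a * f w) i = a * lin K f i"
proof -
  have "lin K (\<lambda>w. a * f w) i = (\<Sum>w\<in>{w. f w \<noteq> 0}. a * f w * K w i)"
    by (rule lin_super) (use assms in auto)
  then show ?thesis unfolding lin_def by (simp add: sum_distrib_left mult.assoc)
qed

lemma lin_diff:
  assumes "finite {w. f w \<noteq> 0}" "finite {w. g w \<noteq> 0}"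
  shows "lin K (f - g) i = lin K f i - lin K g i"
proof -
  let ?S = "{w. f w \<noteq> 0} \<union> {w. g w \<noteq> 0}"
  have "lin K (f - g) i = (\<Sum>w\<in>?S. (f - g) w * K w i)"
    by (rule lin_super) (use assms in auto)
  also have "\<dots> = (\<Sum>w\<in>?S. f w * K w i) - (\<Sum>w\<in>?S. g w * K w i)"
    by (simp add: sum_subtractf left_diff_distrib)
  also have "\<dots> = lin K f i - lin K g i"
    using lin_super[of ?S f K i] lin_super[of ?S g K i] assms by auto
  finally show ?thesis .
qed

lemma lin_zero: "lin K 0 i = 0"
  using lin_super[of "{}" 0 K i] by simp

lemma lin_wd: "lin K (wd u) i = K u i"
proof -
  have "lin K (wd u) i = (\<Sum>w\<in>{u}. wd u w * K w i)"
    by (rule lin_super) (auto simp: wd_def)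
  then show ?thesis by (simp add: wd_def)
qed

lemma supp_sum_finite:
  assumes "finite L" "\<forall>l\<in>L. finite {w. F l w \<noteq> 0}"
  shows "finite {w. (\<Sum>l\<in>L. F l) w \<noteq> (0::'r::comm_ring_1)}"
proof -
  have "{w. (\<Sum>l\<in>L. F l) w \<noteq> 0} \<subseteq> (\<Union>l\<in>L. {w. F l w \<noteq> 0})"
  proof
    fix w assume "w \<in> {w. (\<Sum>l\<in>L. F l) w \<noteq> 0}"
    then have "(\<Sum>l\<in>L. F l w) \<noteq> 0" by (simp add: sum_fun_apply)
    then obtain l where "l \<in> L" "F l w \<noteq> 0" by (meson sum.neutral)
    then show "w \<in> (\<Union>l\<in>L. {w. F l w \<noteq> 0})" by auto
  qed
  then show ?thesis using assms by (auto intro: finite_subset)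
qed

lemma lin_sum:
  assumes "finite L" "\<forall>l\<in>L. finite {w. F l w \<noteq> 0}"
  shows "lin K (\<Sum>l\<in>L. F l) i = (\<Sum>l\<in>L. lin K (F l) i)"
  using assms
proof (induction L rule: finite_induct)
  case empty then show ?case by (metis lin_zero sum.empty)
next
  case (insert l L)
  have "lin K (\<Sum>l\<in>insert l L. F l) i = lin K (F l + (\<Sum>l\<in>L. F l)) i"
    using insert by simp
  also have "\<dots> = lin K (F l) i + lin K (\<Sum>l\<in>L. F l) i"
    by (rule lin_add) (use insert supp_sum_finite[of L F] in auto)
  also have "\<dots> = lin K (F l) i + (\<Sum>l\<in>L. lin K (F l) i)" using insert.IH insert.prems by simp
  also have "\<dots> = (\<Sum>l\<in>insert l L. lin K (F l) i)" using insert by simp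
  finally show ?case .
qed

lemma fa_mult_wd_pt:
  assumes "u \<noteq> []" "v \<noteq> []"
  shows "fa_mult (wd u) (wd v) w = (wd (u @ v) w :: 'r::comm_ring_1)"
proof -
  have e: "(take i w = u \<and> drop i w = v) \<longleftrightarrow> (i = length u \<and> w = u @ v)" if "i \<le> length w" for i
    using that by (auto simp: min_def)
  have "fa_mult (wd u) (wd v) w = (\<Sum>i\<le>length w. (if i = length u \<and> w = u @ v then 1 else 0) :: 'r)"
    unfolding fa_mult_def wd_def by (rule sum.cong) (use e in auto)
  also have "\<dots> = wd (u @ v) w"
    by (cases "w = u @ v") (auto simp: wd_def)
  finally show ?thesis .
qed

lemma fa_mult_wd:
  assumes "u \<noteq> []" "v \<noteq> []"
  shows "fa_mult (wd u) (wd v) = (wd (u @ v) :: _ \<Rightarrow> 'r::comm_ring_1)"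
  using fa_mult_wd_pt[OF assms] by blast

lemma fa_mult_diff_left: "fa_mult (f - g) h = fa_mult f h - fa_mult g h"
  by (simp add: fa_mult_def fun_eq_iff sum_subtractf left_diff_distrib)
lemma fa_mult_diff_right: "fa_mult h (f - g) = fa_mult h f - fa_mult h g"
  by (simp add: fa_mult_def fun_eq_iff sum_subtractf right_diff_distrib)
lemma fa_mult_zero_left: "fa_mult 0 h = 0" by (simp add: fa_mult_def fun_eq_iff)
lemma fa_mult_zero_right: "fa_mult h 0 = 0" by (simp add: fa_mult_def fun_eq_iff)

lemma fa_mult_supp:
  assumes "fa_mult f g w \<noteq> 0"
  shows "\<exists>i\<le>length w. f (take i w) \<noteq> 0 \<and> g (drop i w) \<noteq> 0"
proof (rule ccontr)
  assume "\<not> ?thesis"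
  then have "\<forall>i\<le>length w. f (take i w) * g (drop i w) = 0" by auto
  then show False using assms unfolding fa_mult_def by simp
qed

lemma lin_mult:
  assumes A: "finite A" "{w. f w \<noteq> 0} \<subseteq> A" and B: "finite B" "{w. g w \<noteq> 0} \<subseteq> B"
  shows "lin K (fa_mult f g) i = (\<Sum>u\<in>A. \<Sum>v\<in>B. f u * g v * K (u @ v) i)"
proof -
  define C where "C = (\<lambda>(u, v). u @ v) ` (A \<times> B)"
  have Cf: "finite C" unfolding C_def using A B by auto
  have sub: "{w. fa_mult f g w \<noteq> 0} \<subseteq> C"
  proof
    fix w assume "w \<in> {w. fa_mult f g w \<noteq> 0}"
    then obtain j where "f (take j w) \<noteq> 0" "g (drop j w) \<noteq> 0" using fa_mult_supp by force
    then have "(take j w, drop j w) \<in> A \<times> B" using A B by auto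
    then show "w \<in> C" unfolding C_def by (auto intro!: image_eqI[where x="(take j w, drop j w)"])
  qed
  define Sg where "Sg = Sigma C (\<lambda>w. {..length w})"
  define D where "D = {p \<in> Sg. take (snd p) (fst p) \<in> A \<and> drop (snd p) (fst p) \<in> B}"
  have Sgf: "finite Sg" unfolding Sg_def using Cf by auto
  have "lin K (fa_mult f g) i = (\<Sum>w\<in>C. fa_mult f g w * K w i)"
    by (rule lin_super[OF Cf sub])
  also have "\<dots> = (\<Sum>w\<in>C. \<Sum>j\<le>length w. f (take j w) * g (drop j w) * K w i)"
    unfolding fa_mult_def by (simp add: sum_distrib_right)
  also have "\<dots> = (\<Sum>p\<in>Sg. f (take (snd p) (fst p)) * g (drop (snd p) (fst p)) * K (fst p) i)"
    unfolding Sg_def by (subst sum.Sigma) (use Cf in \<open>auto simp: case_prod_beta\<close>)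
  also have "\<dots> = (\<Sum>p\<in>D. f (take (snd p) (fst p)) * g (drop (snd p) (fst p)) * K (fst p) i)"
    by (rule sum.mono_neutral_right) (use Sgf A B in \<open>auto simp: D_def\<close>)
  also have "\<dots> = (\<Sum>q\<in>A \<times> B. f (fst q) * g (snd q) * K (fst q @ snd q) i)"
  proof (rule sum.reindex_bij_witness[where i="\<lambda>q. (fst q @ snd q, length (fst q))"
        and j="\<lambda>p. (take (snd p) (fst p), drop (snd p) (fst p))"])
    show "\<And>p. p \<in> D \<Longrightarrow> (fst (take (snd p) (fst p), drop (snd p) (fst p)) @ snd (take (snd p) (fst p), drop (snd p) (fst p)),
            length (fst (take (snd p) (fst p), drop (snd p) (fst p)))) = p"
      by (auto simp: D_def Sg_def min_def)
    show "\<And>p. p \<in> D \<Longrightarrow> (take (snd p) (fst p), drop (snd p) (fst p)) \<in> A \<times> B"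
      by (auto simp: D_def)
    show "\<And>q. q \<in> A \<times> B \<Longrightarrow> (take (snd (fst q @ snd q, length (fst q))) (fst (fst q @ snd q, length (fst q))),
           drop (snd (fst q @ snd q, length (fst q))) (fst (fst q @ snd q, length (fst q)))) = q"
      by auto
    show "\<And>q. q \<in> A \<times> B \<Longrightarrow> (fst q @ snd q, length (fst q)) \<in> D"
      by (auto simp: D_def Sg_def C_def)
    show "\<And>p. p \<in> D \<Longrightarrow> f (fst (take (snd p) (fst p), drop (snd p) (fst p))) * g (snd (take (snd p) (fst p), drop (snd p) (fst p))) *
         K (fst (take (snd p) (fst p), drop (snd p) (fst p)) @ snd (take (snd p) (fst p), drop (snd p) (fst p))) i =
         f (take (snd p) (fst p)) * g (drop (snd p) (fst p)) * K (fst p) i"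
      by auto
  qed
  also have "\<dots> = (\<Sum>u\<in>A. \<Sum>v\<in>B. f u * g v * K (u @ v) i)"
    by (simp add: sum.cartesian_product split_beta)
  finally show ?thesis .
qed


lemma carrier_iff: "f \<in> fa_carrier R G \<longleftrightarrow> finite {w. f w \<noteq> 0} \<and> f [] = 0 \<and> (\<forall>w. f w \<noteq> 0 \<longrightarrow> set w \<subseteq> kp_gens G)"
  by (simp add: fa_carrier_def)

lemma carrier_wd: "u \<noteq> [] \<Longrightarrow> set u \<subseteq> kp_gens G \<Longrightarrow> (wd u :: _ \<Rightarrow> 'r) \<in> fa_carrier (R :: 'r::comm_ring_1 itself) G"
  unfolding carrier_iff wd_def by auto

lemma carrier_zero: "0 \<in> fa_carrier R G"
  unfolding carrier_iff by simp

lemma carrier_add: "f \<in> fa_carrier R G \<Longrightarrow> g \<in> fa_carrier R G \<Longrightarrow> f + g \<in> fa_carrier R G"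
proof -
  assume a: "f \<in> fa_carrier R G" "g \<in> fa_carrier R G"
  have h: "\<forall>w. (f + g) w \<noteq> 0 \<longrightarrow> f w \<noteq> 0 \<or> g w \<noteq> 0" by auto
  have "finite {w. (f + g) w \<noteq> 0}"
    by (rule finite_subset[of _ "{w. f w \<noteq> 0} \<union> {w. g w \<noteq> 0}"]) (use a h carrier_iff in auto)
  then show ?thesis using a h unfolding carrier_iff by auto
qed

lemma carrier_smult: "f \<in> fa_carrier R G \<Longrightarrow> (\<lambda>w. a * f w) \<in> fa_carrier R G"
proof -
  assume a: "f \<in> fa_carrier R G"
  have h: "\<forall>w. a * f w \<noteq> 0 \<longrightarrow> f w \<noteq> 0" by auto
  have "finite {w. a * f w \<noteq> 0}"
    by (rule finite_subset[of _ "{w. f w \<noteq> 0}"]) (use a h carrier_iff in auto)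
  then show ?thesis using a h unfolding carrier_iff by auto
qed

lemma carrier_uminus: "f \<in> fa_carrier R G \<Longrightarrow> - f \<in> fa_carrier R G"
  unfolding carrier_iff by auto

lemma carrier_diff: "f \<in> fa_carrier R G \<Longrightarrow> g \<in> fa_carrier R G \<Longrightarrow> f - g \<in> fa_carrier R G"
  using carrier_add[of f R G "- g"] carrier_uminus[of g R G] by simp

lemma carrier_sum: "(\<forall>l\<in>L. F l \<in> fa_carrier R G) \<Longrightarrow> (\<Sum>l\<in>L. F l) \<in> fa_carrier R G"
  by (induction L rule: infinite_finite_induct) (auto intro: carrier_add carrier_zero)

lemma carrier_mult:
  assumes "f \<in> fa_carrier R G" "g \<in> fa_carrier R G"
  shows "fa_mult f g \<in> fa_carrier R G"
proof -
  have fin: "finite {w. f w \<noteq> 0}" "finite {w. g w \<noteq> 0}" using assms carrier_iff by auto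
  have sub: "{w. fa_mult f g w \<noteq> 0} \<subseteq> (\<lambda>(u, v). u @ v) ` ({w. f w \<noteq> 0} \<times> {w. g w \<noteq> 0})"
  proof
    fix w assume "w \<in> {w. fa_mult f g w \<noteq> 0}"
    then obtain j where "f (take j w) \<noteq> 0" "g (drop j w) \<noteq> 0" using fa_mult_supp by force
    then show "w \<in> (\<lambda>(u, v). u @ v) ` ({w. f w \<noteq> 0} \<times> {w. g w \<noteq> 0})"
      by (auto intro!: image_eqI[where x="(take j w, drop j w)"])
  qed
  have "finite {w. fa_mult f g w \<noteq> 0}" by (rule finite_subset[OF sub]) (use fin in auto)
  moreover have "fa_mult f g [] = 0" using assms unfolding carrier_iff fa_mult_def by simp
  moreover have "set w \<subseteq> kp_gens G" if h: "fa_mult f g w \<noteq> 0" for w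
  proof -
    obtain j where j: "f (take j w) \<noteq> 0" "g (drop j w) \<noteq> 0" using fa_mult_supp[OF h] by force
    have "set (take j w) \<subseteq> kp_gens G" using assms(1) j(1) unfolding carrier_iff by blast
    moreover have "set (drop j w) \<subseteq> kp_gens G" using assms(2) j(2) unfolding carrier_iff by blast
    ultimately show ?thesis by (metis append_take_drop_id set_append le_sup_iff)
  qed
  ultimately show ?thesis unfolding carrier_iff by blast
qed

lemma fa_mult_wd1: "fa_mult (wd [a]) (wd [b]) = (wd [a, b] :: _ \<Rightarrow> 'r::comm_ring_1)"
  using fa_mult_wd[of "[a]" "[b]"] by simp

lemma rels_cases:
  assumes "f \<in> kp_rels (R :: 'r::comm_ring_1 itself) G"
  obtains (kp1) v w where "v \<in> vertices G" "w \<in> vertices G"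
      "f = wd [GP v, GP w] - (if v = w then wd [GP v] else 0)"
  | (kp2a) x y where "x \<in> paths G" "y \<in> paths G" "deg G x \<noteq> 0" "deg G y \<noteq> 0" "src G x = rng G y"
      "f = wd [GS x, GS y] - wd [GS (cmp G x y)]"
  | (kp2b) x y where "x \<in> paths G" "y \<in> paths G" "deg G x \<noteq> 0" "deg G y \<noteq> 0" "src G x = rng G y"
      "f = wd [GSs y, GSs x] - wd [GSs (cmp G x y)]"
  | (kp2c) x where "x \<in> paths G" "deg G x \<noteq> 0" "f = wd [GP (rng G x), GS x] - wd [GS x]"
  | (kp2d) x where "x \<in> paths G" "deg G x \<noteq> 0" "f = wd [GS x, GP (src G x)] - wd [GS x]"
  | (kp2e) x where "x \<in> paths G" "deg G x \<noteq> 0" "f = wd [GP (src G x), GSs x] - wd [GSs x]"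
  | (kp2f) x where "x \<in> paths G" "deg G x \<noteq> 0" "f = wd [GSs x, GP (rng G x)] - wd [GSs x]"
  | (kp3) x y where "x \<in> paths G" "y \<in> paths G" "deg G x \<noteq> 0" "deg G y \<noteq> 0" "deg G x = deg G y"
      "f = wd [GSs x, GS y] - (if x = y then wd [GP (src G x)] else 0)"
  | (kp4) v n where "v \<in> vertices G" "n \<noteq> 0"
      "f = wd [GP v] - (\<Sum>x\<in>{x \<in> paths G. deg G x = n \<and> rng G x = v}. wd [GS x, GSs x])"
  using assms unfolding kp_rels_def fa_gen_wd fa_mult_wd1
  apply (elim UnE CollectE exE conjE)
  apply (rule kp1; assumption)
  apply (rule kp2a; assumption)
  apply (rule kp2b; assumption)
  apply (rule kp2c; assumption)
  apply (rule kp2d; assumption)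
  apply (rule kp2e; assumption)
  apply (rule kp2f; assumption)
  apply (rule kp3; assumption)
  apply (rule kp4; assumption)
  done

lemma rels_carrier:
  assumes "is_kgraph G" "f \<in> kp_rels R G"
  shows "f \<in> fa_carrier R G"
proof -
  interpret kg G by (rule kg.intro[OF assms(1)])
  have V: "r x \<in> vertices G" "s x \<in> vertices G" if "x \<in> P" for x
    using that r_in s_in dr ds unfolding vertices_def by auto
  have gS: "GS x \<in> kp_gens G" "GSs x \<in> kp_gens G" if "x \<in> P" "d x \<noteq> 0" for x
    using that unfolding kp_gens_def by auto
  have gP: "GP v \<in> kp_gens G" if "v \<in> vertices G" for v
    using that unfolding kp_gens_def by auto
  have gc: "c x y \<in> P \<and> d (c x y) \<noteq> 0" if "x \<in> P" "y \<in> P" "d x \<noteq> 0" "s x = r y" for x y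
    using that c_in d_c by (auto simp: fun_eq_iff)
  note cw = carrier_wd[of _ G R]
  from assms(2) show ?thesis
  proof (cases rule: rels_cases)
    case (kp1 v w) then show ?thesis using gP by (auto intro!: carrier_diff cw carrier_zero)
  next
    case (kp2a x y) then show ?thesis using gS gc[of x y] by (auto intro!: carrier_diff cw)
  next
    case (kp2b x y) then show ?thesis using gS gc[of x y] by (auto intro!: carrier_diff cw)
  next
    case (kp2c x) then show ?thesis using gS gP V by (auto intro!: carrier_diff cw)
  next
    case (kp2d x) then show ?thesis using gS gP V by (auto intro!: carrier_diff cw)
  next
    case (kp2e x) then show ?thesis using gS gP V by (auto intro!: carrier_diff cw)
  next
    case (kp2f x) then show ?thesis using gS gP V by (auto intro!: carrier_diff cw)
  next
    case (kp3 x y) then show ?thesis using gS gP V by (auto intro!: carrier_diff cw carrier_zero)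
  next
    case (kp4 v n) then show ?thesis using gS gP
      by (auto intro!: carrier_diff cw carrier_sum)
  qed
qed

lemma ideal_carrier:
  assumes "is_kgraph G" "f \<in> kp_ideal R G"
  shows "f \<in> fa_carrier R G"
  using assms(2)
proof induction
  case (rel f) then show ?case by (rule rels_carrier[OF assms(1)])
next
  case zero then show ?case by (rule carrier_zero)
next
  case (add f g) then show ?case by (blast intro: carrier_add)
next
  case (smult f a) then show ?case by (blast intro: carrier_smult)
next
  case (lmult f h) then show ?case by (blast intro: carrier_mult)
next
  case (rmult f h) then show ?case by (blast intro: carrier_mult)
qed



lemma wd_fin: "finite {w. (wd u :: _ \<Rightarrow> 'r::comm_ring_1) w \<noteq> 0}"
  by (rule finite_subset[of _ "{u}"]) (auto simp: wd_def)

lemma lin_wd_diff: "lin K (wd u - wd v) i = (K u i - K v i :: 'r::comm_ring_1)"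
  using lin_diff[OF wd_fin wd_fin] lin_wd by metis

context kg
begin

fun gop :: "'a kpgen \<Rightarrow> (('k \<Rightarrow> nat) \<Rightarrow> 'a) \<Rightarrow> (('k \<Rightarrow> nat) \<Rightarrow> 'a) option" where
  "gop (GP v) x = (if x 0 = v then Some x else None)"
| "gop (GS l) x = (if x (d l) = l then Some (shift (d l) x) else None)"
| "gop (GSs l) x = (if l \<in> P \<and> x 0 = s l then Some (ext l x) else None)"

fun pw :: "'a kpgen list \<Rightarrow> (('k \<Rightarrow> nat) \<Rightarrow> 'a) \<Rightarrow> (('k \<Rightarrow> nat) \<Rightarrow> 'a) option" where
  "pw [] x = Some x"
| "pw (g # w) x = Option.bind (gop g x) (pw w)"

definition Kop :: "'a kpgen list \<Rightarrow> ((('k \<Rightarrow> nat) \<Rightarrow> 'a) \<Rightarrow> 'r) \<times> (('k \<Rightarrow> nat) \<Rightarrow> 'a) \<Rightarrow> 'r::comm_ring_1" where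
  "Kop w p = (case pw w (snd p) of None \<Rightarrow> 0 | Some y \<Rightarrow> fst p y)"

lemma gop_X: "x \<in> ipaths \<Longrightarrow> gop g x = Some y \<Longrightarrow> y \<in> ipaths"
  by (cases g) (auto split: if_splits intro: shift_X ext_X)

lemma pw_X: "x \<in> ipaths \<Longrightarrow> pw w x = Some y \<Longrightarrow> y \<in> ipaths"
proof (induction w arbitrary: x)
  case Nil then show ?case by simp
next
  case (Cons g w)
  then obtain z where "gop g x = Some z" "pw w z = Some y" by (cases "gop g x") auto
  then show ?case using Cons gop_X by blast
qed

lemma pw_append: "pw (u @ w) x = Option.bind (pw u x) (pw w)"
proof (induction u arbitrary: x)
  case Nil show ?case by simp
next
  case (Cons g u)
  have e: "pw (u @ w) = (\<lambda>y. Option.bind (pw u y) (pw w))" using Cons.IH by (rule ext)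
  show ?case by (simp add: e Option.bind_assoc)
qed

lemma pw_nil: "pw [] = Some" by (rule ext) simp

lemma pw_single: "pw [g] x = gop g x"
  by (cases "gop g x") (auto simp: pw_nil)

lemma pw_two: "pw [a, b] x = Option.bind (gop a x) (gop b)"
proof -
  have e: "pw [b] = gop b" by (rule ext) (rule pw_single)
  show ?thesis by (simp add: e)
qed

lemma Kop_append:
  "Kop (u @ w) (\<xi>, x) = (case pw u x of None \<Rightarrow> 0 | Some y \<Rightarrow> Kop w (\<xi>, y))"
  unfolding Kop_def pw_append by (cases "pw u x") (auto split: option.split)

lemma opk_lmult:
  assumes A: "finite A" "{w. h w \<noteq> 0} \<subseteq> A" and B: "finite B" "{w. f w \<noteq> 0} \<subseteq> B"
    and f: "\<forall>\<xi>. \<forall>y\<in>ipaths. lin Kop f (\<xi>, y) = (0::'r::comm_ring_1)"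
    and x: "x \<in> ipaths"
  shows "lin Kop (fa_mult h f) (\<xi>, x) = 0"
proof -
  have "lin Kop (fa_mult h f) (\<xi>, x) = (\<Sum>u\<in>A. \<Sum>v\<in>B. h u * f v * Kop (u @ v) (\<xi>, x))"
    by (rule lin_mult[OF A B])
  also have "\<dots> = (\<Sum>u\<in>A. 0)"
  proof (rule sum.cong[OF refl])
    fix u assume "u \<in> A"
    show "(\<Sum>v\<in>B. h u * f v * Kop (u @ v) (\<xi>, x)) = 0"
    proof (cases "pw u x")
      case None then show ?thesis by (simp add: Kop_append)
    next
      case (Some y)
      then have y: "y \<in> ipaths" using pw_X x by blast
      have "(\<Sum>v\<in>B. h u * f v * Kop (u @ v) (\<xi>, x)) = h u * (\<Sum>v\<in>B. f v * Kop v (\<xi>, y))"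
        using Some by (simp add: Kop_append sum_distrib_left mult.assoc)
      also have "\<dots> = h u * lin Kop f (\<xi>, y)" using lin_super[OF B, of Kop "(\<xi>, y)"] by simp
      finally show ?thesis using f y by simp
    qed
  qed
  finally show ?thesis by simp
qed

lemma opk_rmult:
  assumes A: "finite A" "{w. f w \<noteq> 0} \<subseteq> A" and B: "finite B" "{w. h w \<noteq> 0} \<subseteq> B"
    and f: "\<forall>\<xi>. \<forall>y\<in>ipaths. lin Kop f (\<xi>, y) = (0::'r::comm_ring_1)"
    and x: "x \<in> ipaths"
  shows "lin Kop (fa_mult f h) (\<xi>, x) = 0"
proof -
  define \<xi>' where "\<xi>' = (\<lambda>y. lin Kop h (\<xi>, y))"
  have "lin Kop (fa_mult f h) (\<xi>, x) = (\<Sum>u\<in>A. \<Sum>v\<in>B. f u * h v * Kop (u @ v) (\<xi>, x))"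
    by (rule lin_mult[OF A B])
  also have "\<dots> = (\<Sum>u\<in>A. f u * Kop u (\<xi>', x))"
  proof (rule sum.cong[OF refl])
    fix u assume "u \<in> A"
    show "(\<Sum>v\<in>B. f u * h v * Kop (u @ v) (\<xi>, x)) = f u * Kop u (\<xi>', x)"
    proof (cases "pw u x")
      case None
      have "Kop u (\<xi>', x) = 0" using None by (simp add: Kop_def)
      then show ?thesis using None by (simp add: Kop_append)
    next
      case (Some y)
      have "(\<Sum>v\<in>B. f u * h v * Kop (u @ v) (\<xi>, x)) = f u * (\<Sum>v\<in>B. h v * Kop v (\<xi>, y))"
        using Some by (simp add: Kop_append sum_distrib_left mult.assoc)
      also have "\<dots> = f u * \<xi>' y" unfolding \<xi>'_def using lin_super[OF B, of Kop "(\<xi>, y)"] by simp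
      finally show ?thesis using Some by (simp add: Kop_def)
    qed
  qed
  also have "\<dots> = lin Kop f (\<xi>', x)" using lin_super[OF A, of Kop "(\<xi>', x)"] by simp
  finally show ?thesis using f x by simp
qed


lemma Kop_eq0: "pw u z = pw u' z \<Longrightarrow> lin Kop (wd u - wd u') (\<xi>, z) = (0::'r::comm_ring_1)"
  by (simp add: lin_wd_diff Kop_def)

lemma Kop_none0: "pw u z = None \<Longrightarrow> lin Kop (wd u - 0) (\<xi>, z) = (0::'r::comm_ring_1)"
  by (simp add: lin_wd Kop_def)

lemma ideal_opk:
  assumes rf: "row_finite G" and f: "f \<in> kp_ideal (R::'r::comm_ring_1 itself) G"
  shows "\<forall>\<xi>. \<forall>x\<in>ipaths. lin Kop f (\<xi>, x) = (0::'r)"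
  using f
proof induction
  case (rel f)
  show ?case
  proof (intro allI ballI)
    fix \<xi> :: "_ \<Rightarrow> 'r" and z assume z: "z \<in> ipaths"
    from rel show "lin Kop f (\<xi>, z) = 0"
    proof (cases rule: rels_cases)
      case (kp1 v w) then show ?thesis
        by (cases "v = w") (auto intro!: Kop_eq0 simp: pw_two pw_single lin_wd Kop_def)
    next
      case (kp2a x y)
      have "pw [GS x, GS y] z = pw [GS (c x y)] z"
        using starts_iff[OF z kp2a(1,2,5)] shift_shift[OF z, where p="d x" and q="d y"] d_c[OF kp2a(1,2,5)]
        by (auto simp: pw_two pw_single)
      then show ?thesis unfolding kp2a(6) by (rule Kop_eq0)
    next
      case (kp2b x y)
      have "pw [GSs y, GSs x] z = pw [GSs (c x y)] z"
      proof (cases "z 0 = s y")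
        case True
        then show ?thesis
          using ext0[OF z kp2b(2) True[symmetric]] ext_ext[OF z kp2b(1,2,5) True[symmetric]]
            s_c[OF kp2b(1,2,5)] c_in[OF kp2b(1,2,5)] kp2b
          by (auto simp: pw_two pw_single)
      next
        case False
        then show ?thesis using s_c[OF kp2b(1,2,5)] by (auto simp: pw_two pw_single)
      qed
      then show ?thesis unfolding kp2b(6) by (rule Kop_eq0)
    next
      case (kp2c x)
      have "pw [GP (r x), GS x] z = pw [GS x] z"
        using ip_r[OF z, of "d x"] by (auto simp: pw_two pw_single)
      then show ?thesis unfolding kp2c(3) by (rule Kop_eq0)
    next
      case (kp2d x)
      have "pw [GS x, GP (s x)] z = pw [GS x] z"
        using shift0[OF z, of "d x"] by (auto simp: pw_two pw_single)
      then show ?thesis unfolding kp2d(3) by (rule Kop_eq0)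
    next
      case (kp2e x)
      have "pw [GP (s x), GSs x] z = pw [GSs x] z"
        by (auto simp: pw_two pw_single)
      then show ?thesis unfolding kp2e(3) by (rule Kop_eq0)
    next
      case (kp2f x)
      have "pw [GSs x, GP (r x)] z = pw [GSs x] z"
        using ext0[OF z kp2f(1)] by (auto simp: pw_two pw_single)
      then show ?thesis unfolding kp2f(3) by (rule Kop_eq0)
    next
      case (kp3 x y)
      show ?thesis
      proof (cases "x = y")
        case True
        have "pw [GSs x, GS y] z = pw [GP (s x)] z"
          using ext_dl[OF z kp3(1)] shift_ext[OF z kp3(1)] True kp3(1)
          by (auto simp: pw_two pw_single)
        then show ?thesis unfolding kp3(6) if_P[OF True] by (rule Kop_eq0)
      next
        case False
        have "pw [GSs x, GS y] z = None"
          using ext_dl[OF z kp3(1)] False kp3(5)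
          by (auto simp: pw_two pw_single)
        then show ?thesis unfolding kp3(6) if_not_P[OF False] by (rule Kop_none0)
      qed
    next
      case (kp4 v n)
      define L where "L = {x \<in> P. d x = n \<and> r x = v}"
      have Lf: "finite L" using rf kp4(1) unfolding row_finite_def L_def by blast
      have fin: "\<forall>l\<in>L. finite {w. (wd [GS l, GSs l] :: _ \<Rightarrow> 'r) w \<noteq> 0}" using wd_fin by blast
      have "lin Kop f (\<xi>, z) = lin Kop (wd [GP v]) (\<xi>, z) - lin Kop (\<Sum>l\<in>L. wd [GS l, GSs l]) (\<xi>, z)"
        unfolding kp4(3) L_def[symmetric] by (rule lin_diff[OF wd_fin supp_sum_finite[OF Lf fin]])
      also have "\<dots> = Kop [GP v] (\<xi>, z) - (\<Sum>l\<in>L. Kop [GS l, GSs l] (\<xi>, z))"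
        by (simp only: lin_wd lin_sum[OF Lf fin])
      also have "(\<Sum>l\<in>L. Kop [GS l, GSs l] (\<xi>, z)) = (\<Sum>l\<in>L. if z n = l then \<xi> z else 0)"
      proof (rule sum.cong[OF refl])
        fix l assume l: "l \<in> L"
        then have lP: "l \<in> P" and dl: "d l = n" unfolding L_def by auto
        show "Kop [GS l, GSs l] (\<xi>, z) = (if z n = l then \<xi> z else 0)"
          using shift0[OF z, of n] ext_shift[OF z, of l] lP dl
          by (auto simp: Kop_def pw_two pw_single)
      qed
      also have "\<dots> = (if z n \<in> L then \<xi> z else 0)"
        using sum.delta'[OF Lf, of "z n" "\<lambda>_. \<xi> z"] by simp
      also have "(z n \<in> L) = (z 0 = v)"
        unfolding L_def using ipD(1,2)[OF z] ip_r[OF z] by auto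
      finally have e: "lin Kop f (\<xi>, z) = Kop [GP v] (\<xi>, z) - (if z 0 = v then \<xi> z else 0)" .
      have "Kop [GP v] (\<xi>, z) = (if z 0 = v then \<xi> z else 0)" by (simp add: Kop_def pw_single)
      then show ?thesis using e by simp
    qed
  qed
next
  case zero then show ?case by (intro allI ballI) (rule lin_zero)
next
  case (add f g)
  have "finite {w. f w \<noteq> 0}" "finite {w. g w \<noteq> 0}"
    using ideal_carrier[OF kg add(1)] ideal_carrier[OF kg add(2)] carrier_iff by auto
  note ff = this
  show ?case
  proof (intro allI ballI)
    fix \<xi> :: "_ \<Rightarrow> 'r" and x assume x: "x \<in> ipaths"
    have "lin Kop (f + g) (\<xi>, x) = lin Kop f (\<xi>, x) + lin Kop g (\<xi>, x)" by (rule lin_add[OF ff])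
    then show "lin Kop (f + g) (\<xi>, x) = 0" using add.IH x by simp
  qed
next
  case (smult f a)
  have "finite {w. f w \<noteq> 0}" using ideal_carrier[OF kg smult(1)] carrier_iff by auto
  note ff = this
  show ?case
  proof (intro allI ballI)
    fix \<xi> :: "_ \<Rightarrow> 'r" and x assume x: "x \<in> ipaths"
    have "lin Kop (\<lambda>w. a * f w) (\<xi>, x) = a * lin Kop f (\<xi>, x)" by (rule lin_smult[OF ff])
    then show "lin Kop (\<lambda>w. a * f w) (\<xi>, x) = 0" using smult.IH x by simp
  qed
next
  case (lmult f h)
  have B: "finite {w. f w \<noteq> 0}" using ideal_carrier[OF kg lmult(1)] carrier_iff by auto
  have A: "finite {w. h w \<noteq> 0}" using lmult(2) carrier_iff by auto
  show ?case using opk_lmult[OF A subset_refl B subset_refl lmult(3)] by blast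
next
  case (rmult f h)
  have A: "finite {w. f w \<noteq> 0}" using ideal_carrier[OF kg rmult(1)] carrier_iff by auto
  have B: "finite {w. h w \<noteq> 0}" using rmult(2) carrier_iff by auto
  show ?case using opk_rmult[OF A subset_refl B subset_refl rmult(3)] by blast
qed

end


context kg
begin

lemma vertD: "v \<in> vertices G \<longleftrightarrow> v \<in> P \<and> d v = 0"
  unfolding vertices_def by simp

lemma r_vert: "x \<in> P \<Longrightarrow> r x \<in> vertices G" and s_vert: "x \<in> P \<Longrightarrow> s x \<in> vertices G"
  using r_in s_in dr ds vertD by auto

lemma comm_contra:
  assumes rf: "row_finite G" and one: "(1::'r::comm_ring_1) \<noteq> 0"
    and comm: "kp_commutative TYPE('r) G"
    and a: "GS a \<in> kp_gens G" "GS b \<in> kp_gens G \<or> GSs b \<in> kp_gens G \<or> GP b \<in> kp_gens G"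
    and z: "z \<in> ipaths"
    and k: "pw [ga, gb] z \<noteq> None" "pw [gb, ga] z = None"
    and gens: "ga \<in> kp_gens G" "gb \<in> kp_gens G"
  shows False
proof -
  have c1: "(wd [ga] :: _ \<Rightarrow> 'r) \<in> fa_carrier TYPE('r) G" "(wd [gb] :: _ \<Rightarrow> 'r) \<in> fa_carrier TYPE('r) G"
    using gens by (auto intro!: carrier_wd)
  have "fa_mult (wd [ga]) (wd [gb]) - fa_mult (wd [gb]) (wd [ga]) \<in> kp_ideal TYPE('r) G"
    using comm c1 unfolding kp_commutative_def by blast
  then have "(wd [ga, gb] - wd [gb, ga] :: _ \<Rightarrow> 'r) \<in> kp_ideal TYPE('r) G"
    by (simp add: fa_mult_wd1)
  from ideal_opk[OF rf this] z
  have "lin Kop (wd [ga, gb] - wd [gb, ga] :: _ \<Rightarrow> 'r) ((\<lambda>_. 1), z) = 0" by blast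
  then have "Kop [ga, gb] ((\<lambda>_. 1::'r), z) - Kop [gb, ga] ((\<lambda>_. 1::'r), z) = 0"
    by (simp add: lin_wd_diff)
  then show False using k one by (auto simp: Kop_def split: option.splits)
qed

lemma comm_imp_B:
  assumes rf: "row_finite G" and ns: "no_sources G" and fin: "finite (UNIV :: 'k set)"
    and one: "(1::'r::comm_ring_1) \<noteq> 0"
    and comm: "kp_commutative TYPE('r) G"
  shows "(\<forall>x\<in>P. r x = s x) \<and> (\<forall>n. inj_on r {x \<in> P. d x = n})"
proof -
  have ns': "\<exists>e. e \<in> P \<and> d e = n \<and> r e = w" if "w \<in> P" "d w = 0" for w n
    using ns that unfolding no_sources_def vertices_def by blast
  have ex: "\<exists>y\<in>ipaths. y 0 = v" if "v \<in> P" "d v = 0" for v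
    by (rule path_exists[OF fin ns' that])
  have RS: "r l = s l" if l: "l \<in> P" for l
  proof (cases "d l = 0")
    case True then show ?thesis using deg0 deg0s l by simp
  next
    case False
    show ?thesis
    proof (rule ccontr)
      assume ne: "r l \<noteq> s l"
      obtain y where y: "y \<in> ipaths" "y 0 = s l" using ex[OF s_in[OF l] ds[OF l]] by blast
      define z where "z = ext l y"
      have z: "z \<in> ipaths" unfolding z_def using ext_X[OF y(1) l] y(2) by simp
      have z0: "z 0 = r l" unfolding z_def using ext0[OF y(1) l] y(2) by simp
      have zl: "z (d l) = l" unfolding z_def using ext_dl[OF y(1) l] y(2) by simp
      have sz: "shift (d l) z = y" unfolding z_def using shift_ext[OF y(1) l] y(2) by simp
      have gens: "GS l \<in> kp_gens G" "GP (r l) \<in> kp_gens G"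
        using l False r_vert unfolding kp_gens_def by auto
      show False
        by (rule comm_contra[OF rf one comm gens(1) _ z _ _ gens(2,1)])
           (use gens z0 zl sz y ne in \<open>auto simp: pw_two\<close>)
    qed
  qed
  have INJ: "inj_on r {x \<in> P. d x = n}" for n
  proof
    fix x1 x2 assume x1: "x1 \<in> {x \<in> P. d x = n}" and x2: "x2 \<in> {x \<in> P. d x = n}" and rr: "r x1 = r x2"
    show "x1 = x2"
    proof (cases "n = 0")
      case True then show ?thesis using deg0 x1 x2 rr by auto
    next
      case False
      show ?thesis
      proof (rule ccontr)
        assume ne: "x1 \<noteq> x2"
        have p1: "x1 \<in> P" "d x1 = n" and p2: "x2 \<in> P" "d x2 = n" using x1 x2 by auto
        obtain y where y: "y \<in> ipaths" "y 0 = s x2" using ex[OF s_in[OF p2(1)] ds[OF p2(1)]] by blast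
        define z where "z = ext x2 y"
        have z: "z \<in> ipaths" unfolding z_def using ext_X[OF y(1) p2(1)] y(2) by simp
        have z0: "z 0 = r x2" unfolding z_def using ext0[OF y(1) p2(1)] y(2) by simp
        have zl: "z (d x2) = x2" unfolding z_def using ext_dl[OF y(1) p2(1)] y(2) by simp
        have sz: "shift (d x2) z = y" unfolding z_def using shift_ext[OF y(1) p2(1)] y(2) by simp
        have s12: "s x1 = s x2" "r x1 = s x1" using RS p1 p2 rr by auto
        have z0': "z 0 = s x1" using z0 rr s12 by simp
        have e1: "ext x1 z (d x1) = x1" using ext_dl[OF z p1(1)] z0' by simp
        have gens: "GS x2 \<in> kp_gens G" "GSs x1 \<in> kp_gens G"
          using p1 p2 False unfolding kp_gens_def by auto
        show False
          by (rule comm_contra[OF rf one comm gens(1) _ z _ _ gens])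
             (use gens z0' zl sz y e1 ne p1 p2 s12 in \<open>auto simp: pw_two\<close>)
      qed
    qed
  qed
  show ?thesis using RS INJ by blast
qed

end


definition weq :: "'r::comm_ring_1 itself \<Rightarrow> ('a, 'k) kgraph \<Rightarrow> 'a kpgen list \<Rightarrow> 'a kpgen list \<Rightarrow> bool" where
  "weq R G u v \<longleftrightarrow> (wd u - wd v :: _ \<Rightarrow> 'r) \<in> kp_ideal R G"

definition wz :: "'r::comm_ring_1 itself \<Rightarrow> ('a, 'k) kgraph \<Rightarrow> 'a kpgen list \<Rightarrow> bool" where
  "wz R G u \<longleftrightarrow> (wd u :: _ \<Rightarrow> 'r) \<in> kp_ideal R G"

lemma ideal_neg: "f \<in> kp_ideal R G \<Longrightarrow> - f \<in> kp_ideal R G"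
proof -
  assume "f \<in> kp_ideal R G"
  then have "(\<lambda>w. (- 1) * f w) \<in> kp_ideal R G" by (rule kp_ideal.smult)
  moreover have "(\<lambda>w. (- 1) * f w) = - f" by (simp add: fun_eq_iff)
  ultimately show ?thesis by simp
qed

lemma ideal_diff: "f \<in> kp_ideal R G \<Longrightarrow> g \<in> kp_ideal R G \<Longrightarrow> f - g \<in> kp_ideal R G"
  using kp_ideal.add[OF _ ideal_neg, of f R G g] by simp

lemma weq_refl: "weq R G u u"
  unfolding weq_def using kp_ideal.zero by simp

lemma weq_sym: "weq R G u v \<Longrightarrow> weq R G v u"
  unfolding weq_def using ideal_neg by fastforce

lemma weq_trans: "weq R G u v \<Longrightarrow> weq R G v w \<Longrightarrow> weq R G u w"
  unfolding weq_def using kp_ideal.add by fastforce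

lemma weq_wz: "weq R G u v \<Longrightarrow> wz R G v \<Longrightarrow> wz R G u"
  unfolding weq_def wz_def using kp_ideal.add by fastforce

lemma wz_weq: "wz R G u \<Longrightarrow> wz R G v \<Longrightarrow> weq R G u v"
  unfolding weq_def wz_def using ideal_diff by blast

lemma weq_ctx_l:
  assumes "weq (R :: 'r::comm_ring_1 itself) G u v" "u \<noteq> []" "v \<noteq> []" "set p \<subseteq> kp_gens G"
  shows "weq R G (p @ u) (p @ v)"
proof (cases "p = []")
  case True then show ?thesis using assms by simp
next
  case False
  have c: "(wd p :: _ \<Rightarrow> 'r) \<in> fa_carrier R G" by (rule carrier_wd[OF False assms(4)])
  have "fa_mult (wd p) (wd u - wd v :: _ \<Rightarrow> 'r) \<in> kp_ideal R G"
    using kp_ideal.lmult[OF _ c] assms(1) unfolding weq_def by blast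
  moreover have "fa_mult (wd p) (wd u) = (wd (p @ u) :: _ \<Rightarrow> 'r)" by (rule fa_mult_wd[OF False assms(2)])
  moreover have "fa_mult (wd p) (wd v) = (wd (p @ v) :: _ \<Rightarrow> 'r)" by (rule fa_mult_wd[OF False assms(3)])
  ultimately show ?thesis unfolding weq_def fa_mult_diff_right by simp
qed

lemma weq_ctx_r:
  assumes "weq (R :: 'r::comm_ring_1 itself) G u v" "u \<noteq> []" "v \<noteq> []" "set q \<subseteq> kp_gens G"
  shows "weq R G (u @ q) (v @ q)"
proof (cases "q = []")
  case True then show ?thesis using assms by simp
next
  case False
  have c: "(wd q :: _ \<Rightarrow> 'r) \<in> fa_carrier R G" by (rule carrier_wd[OF False assms(4)])
  have "fa_mult (wd u - wd v :: _ \<Rightarrow> 'r) (wd q) \<in> kp_ideal R G"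
    using kp_ideal.rmult[OF _ c] assms(1) unfolding weq_def by blast
  moreover have "fa_mult (wd u) (wd q) = (wd (u @ q) :: _ \<Rightarrow> 'r)" by (rule fa_mult_wd[OF assms(2) False])
  moreover have "fa_mult (wd v) (wd q) = (wd (v @ q) :: _ \<Rightarrow> 'r)" by (rule fa_mult_wd[OF assms(3) False])
  ultimately show ?thesis unfolding weq_def fa_mult_diff_left by simp
qed

lemma weq_ctx:
  assumes "weq R G u v" "u \<noteq> []" "v \<noteq> []" "set p \<subseteq> kp_gens G" "set q \<subseteq> kp_gens G"
  shows "weq R G (p @ u @ q) (p @ v @ q)"
  using weq_ctx_l[OF weq_ctx_r[OF assms(1-3,5)] _ _ assms(4)] assms(2,3) by simp

lemma wz_ctx:
  assumes "wz (R :: 'r::comm_ring_1 itself) G u" "u \<noteq> []" "set p \<subseteq> kp_gens G" "set q \<subseteq> kp_gens G"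
  shows "wz R G (p @ u @ q)"
proof -
  have a: "wz R G (u @ q)"
  proof (cases "q = []")
    case True then show ?thesis using assms by simp
  next
    case False
    have c: "(wd q :: _ \<Rightarrow> 'r) \<in> fa_carrier R G" by (rule carrier_wd[OF False assms(4)])
    show ?thesis using kp_ideal.rmult[OF _ c] assms(1) fa_mult_wd[OF assms(2) False] unfolding wz_def by metis
  qed
  show ?thesis
  proof (cases "p = []")
    case True then show ?thesis using a by simp
  next
    case False
    have c: "(wd p :: _ \<Rightarrow> 'r) \<in> fa_carrier R G" by (rule carrier_wd[OF False assms(3)])
    have ne: "u @ q \<noteq> []" using assms(2) by simp
    show ?thesis using kp_ideal.lmult[OF _ c] a fa_mult_wd[OF False ne] unfolding wz_def by (metis append.assoc)
  qed
qed

lemma rel_weq: "(wd u - wd v :: _ \<Rightarrow> 'r) \<in> kp_rels R G \<Longrightarrow> weq (R :: 'r::comm_ring_1 itself) G u v"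
  unfolding weq_def by (rule kp_ideal.rel)

lemma rel_wz: "(wd u - 0 :: _ \<Rightarrow> 'r) \<in> kp_rels R G \<Longrightarrow> wz (R :: 'r::comm_ring_1 itself) G u"
  unfolding wz_def using kp_ideal.rel by fastforce

lemma mem_kp1: "v \<in> vertices G \<Longrightarrow> w \<in> vertices G \<Longrightarrow>
  (wd [GP v, GP w] - (if v = w then wd [GP v] else 0) :: _ \<Rightarrow> 'r) \<in> kp_rels (R :: 'r::comm_ring_1 itself) G"
  unfolding kp_rels_def fa_gen_wd fa_mult_wd1 by blast

lemma mem_kp2a: "x \<in> paths G \<Longrightarrow> y \<in> paths G \<Longrightarrow> deg G x \<noteq> 0 \<Longrightarrow> deg G y \<noteq> 0 \<Longrightarrow> src G x = rng G y \<Longrightarrow>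
  (wd [GS x, GS y] - wd [GS (cmp G x y)] :: _ \<Rightarrow> 'r) \<in> kp_rels (R :: 'r::comm_ring_1 itself) G"
  unfolding kp_rels_def fa_gen_wd fa_mult_wd1 by blast

lemma mem_kp2b: "x \<in> paths G \<Longrightarrow> y \<in> paths G \<Longrightarrow> deg G x \<noteq> 0 \<Longrightarrow> deg G y \<noteq> 0 \<Longrightarrow> src G x = rng G y \<Longrightarrow>
  (wd [GSs y, GSs x] - wd [GSs (cmp G x y)] :: _ \<Rightarrow> 'r) \<in> kp_rels (R :: 'r::comm_ring_1 itself) G"
  unfolding kp_rels_def fa_gen_wd fa_mult_wd1 by blast

lemma mem_kp2c: "x \<in> paths G \<Longrightarrow> deg G x \<noteq> 0 \<Longrightarrow>
  (wd [GP (rng G x), GS x] - wd [GS x] :: _ \<Rightarrow> 'r) \<in> kp_rels (R :: 'r::comm_ring_1 itself) G"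
  unfolding kp_rels_def fa_gen_wd fa_mult_wd1 by blast

lemma mem_kp2d: "x \<in> paths G \<Longrightarrow> deg G x \<noteq> 0 \<Longrightarrow>
  (wd [GS x, GP (src G x)] - wd [GS x] :: _ \<Rightarrow> 'r) \<in> kp_rels (R :: 'r::comm_ring_1 itself) G"
  unfolding kp_rels_def fa_gen_wd fa_mult_wd1 by blast

lemma mem_kp2e: "x \<in> paths G \<Longrightarrow> deg G x \<noteq> 0 \<Longrightarrow>
  (wd [GP (src G x), GSs x] - wd [GSs x] :: _ \<Rightarrow> 'r) \<in> kp_rels (R :: 'r::comm_ring_1 itself) G"
  unfolding kp_rels_def fa_gen_wd fa_mult_wd1 by blast

lemma mem_kp2f: "x \<in> paths G \<Longrightarrow> deg G x \<noteq> 0 \<Longrightarrow>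
  (wd [GSs x, GP (rng G x)] - wd [GSs x] :: _ \<Rightarrow> 'r) \<in> kp_rels (R :: 'r::comm_ring_1 itself) G"
  unfolding kp_rels_def fa_gen_wd fa_mult_wd1 by blast

lemma mem_kp3: "x \<in> paths G \<Longrightarrow> y \<in> paths G \<Longrightarrow> deg G x \<noteq> 0 \<Longrightarrow> deg G y \<noteq> 0 \<Longrightarrow> deg G x = deg G y \<Longrightarrow>
  (wd [GSs x, GS y] - (if x = y then wd [GP (src G x)] else 0) :: _ \<Rightarrow> 'r) \<in> kp_rels (R :: 'r::comm_ring_1 itself) G"
  unfolding kp_rels_def fa_gen_wd fa_mult_wd1 by blast

lemma mem_kp4: "v \<in> vertices G \<Longrightarrow> n \<noteq> 0 \<Longrightarrow>
  (wd [GP v] - (\<Sum>x\<in>{x \<in> paths G. deg G x = n \<and> rng G x = v}. wd [GS x, GSs x]) :: _ \<Rightarrow> 'r)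
     \<in> kp_rels (R :: 'r::comm_ring_1 itself) G"
  unfolding kp_rels_def fa_gen_wd fa_mult_wd1 by blast


lemma weq_ctx':
  assumes "weq R G u v" "u \<noteq> []" "v \<noteq> []" "set p \<subseteq> kp_gens G" "set q \<subseteq> kp_gens G"
    "L1 = p @ u @ q" "L2 = p @ v @ q"
  shows "weq R G L1 L2"
  using weq_ctx[OF assms(1-5)] assms(6,7) by simp

lemma wz_ctx':
  assumes "wz R G u" "u \<noteq> []" "set p \<subseteq> kp_gens G" "set q \<subseteq> kp_gens G" "L1 = p @ u @ q"
  shows "wz R G L1"
  using wz_ctx[OF assms(1-4)] assms(5) by simp

lemma fun_nz_add: "(a :: 'k \<Rightarrow> nat) \<noteq> 0 \<Longrightarrow> a + b \<noteq> 0"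
  by (auto simp: fun_eq_iff)
lemma fun_nz_add2: "(b :: 'k \<Rightarrow> nat) \<noteq> 0 \<Longrightarrow> a + b \<noteq> 0"
  by (auto simp: fun_eq_iff)

locale kgB = kg G for G :: "('a, 'k) kgraph" +
  assumes rseq: "\<forall>x\<in>P. r x = s x"
    and injr: "\<forall>n. inj_on r {x \<in> P. d x = n}"
    and nsrc: "no_sources G"
begin

abbreviation "V \<equiv> vertices G"

definition e :: "'a \<Rightarrow> ('k \<Rightarrow> nat) \<Rightarrow> 'a" where
  "e v n = (THE x. x \<in> P \<and> d x = n \<and> r x = v)"

lemma rs_eq: "x \<in> P \<Longrightarrow> s x = r x" using rseq by simp

lemma e_uniq: "x \<in> P \<Longrightarrow> y \<in> P \<Longrightarrow> d x = d y \<Longrightarrow> r x = r y \<Longrightarrow> x = y"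
  using injr unfolding inj_on_def by blast

lemma e_props: assumes "v \<in> V" shows "e v n \<in> P" "d (e v n) = n" "r (e v n) = v" "s (e v n) = v"
proof -
  obtain x where x: "x \<in> P" "d x = n" "r x = v"
    using nsrc assms unfolding no_sources_def by auto
  have ex: "\<exists>!x. x \<in> P \<and> d x = n \<and> r x = v"
  proof (rule ex1I[of _ x])
    show "x \<in> P \<and> d x = n \<and> r x = v" using x by simp
  next
    fix y assume "y \<in> P \<and> d y = n \<and> r y = v"
    then show "y = x" using e_uniq[of y x] x by simp
  qed
  from theI'[OF ex] show "e v n \<in> P" "d (e v n) = n" "r (e v n) = v" unfolding e_def by auto
  then show "s (e v n) = v" using rs_eq by simp
qed

lemma e_eq: "x \<in> P \<Longrightarrow> e (r x) (d x) = x"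
  using e_props[OF r_vert] e_uniq by metis

lemma e_c: assumes "v \<in> V" shows "c (e v a) (e v b) = e v (a + b)"
proof -
  note pa = e_props[OF assms, of a] and pb = e_props[OF assms, of b]
  have ss: "s (e v a) = r (e v b)" using pa pb by simp
  have "c (e v a) (e v b) \<in> P" "d (c (e v a) (e v b)) = a + b" "r (c (e v a) (e v b)) = v"
    using c_in[OF pa(1) pb(1) ss] d_c[OF pa(1) pb(1) ss] r_c[OF pa(1) pb(1) ss] pa pb by auto
  then show ?thesis using e_uniq e_props[OF assms, of "a + b"] by metis
qed

lemma L_single: assumes v: "v \<in> V" shows "{x \<in> P. d x = n \<and> r x = v} = {e v n}"
proof (rule set_eqI)
  fix x show "x \<in> {x \<in> P. d x = n \<and> r x = v} \<longleftrightarrow> x \<in> {e v n}"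
    using e_props[OF v, of n] e_uniq[of x "e v n"] by auto
qed

lemma gS: "v \<in> V \<Longrightarrow> a \<noteq> 0 \<Longrightarrow> GS (e v a) \<in> kp_gens G \<and> GSs (e v a) \<in> kp_gens G"
  using e_props unfolding kp_gens_def by auto
lemma gSx: "x \<in> P \<Longrightarrow> d x \<noteq> 0 \<Longrightarrow> GS x \<in> kp_gens G \<and> GSs x \<in> kp_gens G"
  unfolding kp_gens_def by auto
lemma gP: "v \<in> V \<Longrightarrow> GP v \<in> kp_gens G"
  unfolding kp_gens_def by auto

lemma W_kp1a: "v \<in> V \<Longrightarrow> weq (R::'r::comm_ring_1 itself) G [GP v, GP v] [GP v]"
  using mem_kp1[of v G v R] by (simp add: rel_weq)
lemma W_kp1b: "v \<in> V \<Longrightarrow> w \<in> V \<Longrightarrow> v \<noteq> w \<Longrightarrow> wz (R::'r::comm_ring_1 itself) G [GP v, GP w]"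
  using mem_kp1[of v G w R] rel_wz[of "[GP v, GP w]" R G] by simp
lemma W_kp2a: "x \<in> P \<Longrightarrow> y \<in> P \<Longrightarrow> d x \<noteq> 0 \<Longrightarrow> d y \<noteq> 0 \<Longrightarrow> s x = r y \<Longrightarrow>
    weq (R::'r::comm_ring_1 itself) G [GS x, GS y] [GS (c x y)]"
  by (rule rel_weq[OF mem_kp2a])
lemma W_kp2b: "x \<in> P \<Longrightarrow> y \<in> P \<Longrightarrow> d x \<noteq> 0 \<Longrightarrow> d y \<noteq> 0 \<Longrightarrow> s x = r y \<Longrightarrow>
    weq (R::'r::comm_ring_1 itself) G [GSs y, GSs x] [GSs (c x y)]"
  by (rule rel_weq[OF mem_kp2b])
lemma W_kp2c: "x \<in> P \<Longrightarrow> d x \<noteq> 0 \<Longrightarrow> weq (R::'r::comm_ring_1 itself) G [GP (r x), GS x] [GS x]"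
  by (rule rel_weq[OF mem_kp2c])
lemma W_kp2d: "x \<in> P \<Longrightarrow> d x \<noteq> 0 \<Longrightarrow> weq (R::'r::comm_ring_1 itself) G [GS x, GP (s x)] [GS x]"
  by (rule rel_weq[OF mem_kp2d])
lemma W_kp2e: "x \<in> P \<Longrightarrow> d x \<noteq> 0 \<Longrightarrow> weq (R::'r::comm_ring_1 itself) G [GP (s x), GSs x] [GSs x]"
  by (rule rel_weq[OF mem_kp2e])
lemma W_kp2f: "x \<in> P \<Longrightarrow> d x \<noteq> 0 \<Longrightarrow> weq (R::'r::comm_ring_1 itself) G [GSs x, GP (r x)] [GSs x]"
  by (rule rel_weq[OF mem_kp2f])
lemma W_kp3a: "x \<in> P \<Longrightarrow> d x \<noteq> 0 \<Longrightarrow> weq (R::'r::comm_ring_1 itself) G [GSs x, GS x] [GP (s x)]"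
  using mem_kp3[of x G x R] by (simp add: rel_weq)
lemma W_kp4: "v \<in> V \<Longrightarrow> n \<noteq> 0 \<Longrightarrow>
    weq (R::'r::comm_ring_1 itself) G [GP v] [GS (e v n), GSs (e v n)]"
  using mem_kp4[of v G n R] L_single[of v n] by (simp add: rel_weq)

definition NW :: "'a \<Rightarrow> ('k \<Rightarrow> nat) \<Rightarrow> ('k \<Rightarrow> nat) \<Rightarrow> 'a kpgen list" where
  "NW v a b = [GS (e v a), GSs (e v b)]"

lemma StepP_eq:
  assumes v: "v \<in> V" and a: "a \<noteq> 0" and b: "b \<noteq> 0"
  shows "weq (R::'r::comm_ring_1 itself) G (GP v # NW v a b) (NW v a b)"
  unfolding NW_def
  by (rule weq_ctx'[OF W_kp2c[of "e v a"], where p="[]" and q="[GSs (e v b)]"])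
     (use e_props[OF v] gS[OF v b] a in auto)

lemma StepP_ne:
  assumes v: "v \<in> V" and a: "a \<noteq> 0" and b: "b \<noteq> 0" and u: "u \<in> V" "u \<noteq> v"
  shows "wz (R::'r::comm_ring_1 itself) G (GP u # NW v a b)"
proof -
  have "weq R G (GP u # NW v a b) ([GP u, GP v] @ [GS (e v a), GSs (e v b)])"
    unfolding NW_def
    by (rule weq_ctx'[OF weq_sym[OF W_kp2c[of "e v a"]], where p="[GP u]" and q="[GSs (e v b)]"])
       (use e_props[OF v] gS[OF v b] gP[OF u(1)] a in auto)
  moreover have "wz R G ([GP u, GP v] @ [GS (e v a), GSs (e v b)])"
    by (rule wz_ctx'[OF W_kp1b[OF u(1) v u(2)], where p="[]" and q="[GS (e v a), GSs (e v b)]"])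
       (use gS[OF v a] gS[OF v b] in auto)
  ultimately show ?thesis by (rule weq_wz)
qed

lemma StepS_eq:
  assumes v: "v \<in> V" and a: "a \<noteq> 0" and b: "b \<noteq> 0" and x: "x \<in> P" "d x \<noteq> 0" "r x = v"
  shows "weq (R::'r::comm_ring_1 itself) G (GS x # NW v a b) (NW v (d x + a) b)"
proof -
  have xe: "x = e v (d x)" using e_eq[OF x(1)] x(3) by simp
  have "c x (e v a) = e v (d x + a)" using e_c[OF v, of "d x" a] xe by simp
  then show ?thesis
    unfolding NW_def
    by (intro weq_ctx'[OF W_kp2a[of x "e v a"], where p="[]" and q="[GSs (e v b)]"])
       (use e_props[OF v] gS[OF v b] a x rs_eq in auto)
qed

lemma StepS_ne:
  assumes v: "v \<in> V" and a: "a \<noteq> 0" and b: "b \<noteq> 0" and x: "x \<in> P" "d x \<noteq> 0" "r x \<noteq> v"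
  shows "wz (R::'r::comm_ring_1 itself) G (GS x # NW v a b)"
proof -
  have u: "r x \<in> V" using r_vert[OF x(1)] .
  have "weq R G (GS x # NW v a b) ([GS x] @ (GP (r x) # NW v a b))"
    unfolding NW_def
    by (rule weq_ctx'[OF weq_sym[OF W_kp2d[OF x(1,2)]], where p="[]" and q="[GS (e v a), GSs (e v b)]"])
       (use gS[OF v a] gS[OF v b] gSx[OF x(1,2)] rs_eq[OF x(1)] in auto)
  moreover have "wz R G ([GS x] @ (GP (r x) # NW v a b))"
    by (rule wz_ctx'[OF StepP_ne[OF v a b u x(3)], where p="[GS x]" and q="[]"])
       (use gSx[OF x(1,2)] in auto)
  ultimately show ?thesis by (rule weq_wz)
qed

lemma StepSs_ne:
  assumes v: "v \<in> V" and a: "a \<noteq> 0" and b: "b \<noteq> 0" and x: "x \<in> P" "d x \<noteq> 0" "r x \<noteq> v"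
  shows "wz (R::'r::comm_ring_1 itself) G (GSs x # NW v a b)"
proof -
  have u: "r x \<in> V" using r_vert[OF x(1)] .
  have "weq R G (GSs x # NW v a b) ([GSs x] @ (GP (r x) # NW v a b))"
    unfolding NW_def
    by (rule weq_ctx'[OF weq_sym[OF W_kp2f[OF x(1,2)]], where p="[]" and q="[GS (e v a), GSs (e v b)]"])
       (use gS[OF v a] gS[OF v b] gSx[OF x(1,2)] in auto)
  moreover have "wz R G ([GSs x] @ (GP (r x) # NW v a b))"
    by (rule wz_ctx'[OF StepP_ne[OF v a b u x(3)], where p="[GSs x]" and q="[]"])
       (use gSx[OF x(1,2)] in auto)
  ultimately show ?thesis by (rule weq_wz)
qed


lemma StepSs_eq:
  assumes v: "v \<in> V" and a: "a \<noteq> 0" and b: "b \<noteq> 0" and x: "x \<in> P" "d x \<noteq> 0" "r x = v"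
  shows "weq (R::'r::comm_ring_1 itself) G (GSs x # NW v a b) (NW v a (b + d x))"
proof -
  note ea = e_props[OF v, of a] and eb = e_props[OF v, of b]
  have xe: "e v (d x) = x" using e_eq[OF x(1)] x(3) by simp
  have sx: "s x = v" using rs_eq[OF x(1)] x(3) by simp
  have gx: "GS x \<in> kp_gens G" "GSs x \<in> kp_gens G" using gSx[OF x(1,2)] by auto
  have ga: "GS (e v a) \<in> kp_gens G" "GSs (e v a) \<in> kp_gens G" using gS[OF v a] by auto
  have gb: "GS (e v b) \<in> kp_gens G" "GSs (e v b) \<in> kp_gens G" using gS[OF v b] by auto
  have gv: "GP v \<in> kp_gens G" using gP[OF v] .
  have s1: "weq R G [GSs x, GS (e v a), GSs (e v b)] [GSs x, GS (e v a), GP v, GSs (e v b)]"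
    by (rule weq_ctx'[OF weq_sym[OF W_kp2d[of "e v a"]], where p="[GSs x]" and q="[GSs (e v b)]"])
       (use ea a gx gb in auto)
  have s2: "weq R G [GSs x, GS (e v a), GP v, GSs (e v b)] [GSs x, GS (e v a), GS x, GSs x, GSs (e v b)]"
    by (rule weq_ctx'[OF W_kp4[OF v x(2)], where p="[GSs x, GS (e v a)]" and q="[GSs (e v b)]"])
       (use xe gx ga gb in auto)
  have c1: "weq R G [GS (e v a), GS x] [GS (e v (a + d x))]"
    using W_kp2a[of "e v a" x] e_c[OF v, of a "d x"] ea x xe sx a by auto
  have c2: "weq R G [GS x, GS (e v a)] [GS (e v (d x + a))]"
    using W_kp2a[of x "e v a"] e_c[OF v, of "d x" a] ea x xe sx a by auto
  have c3: "weq R G [GS (e v a), GS x] [GS x, GS (e v a)]"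
  proof -
    have c2': "weq R G [GS x, GS (e v a)] [GS (e v (a + d x))]" using c2 by (simp add: add.commute)
    show ?thesis by (rule weq_trans[OF c1 weq_sym[OF c2']])
  qed
  have s3: "weq R G [GSs x, GS (e v a), GS x, GSs x, GSs (e v b)] [GSs x, GS x, GS (e v a), GSs x, GSs (e v b)]"
    by (rule weq_ctx'[OF c3, where p="[GSs x]" and q="[GSs x, GSs (e v b)]"])
       (use gx gb in auto)
  have s4: "weq R G [GSs x, GS x, GS (e v a), GSs x, GSs (e v b)] [GP v, GS (e v a), GSs x, GSs (e v b)]"
    by (rule weq_ctx'[OF W_kp3a[OF x(1,2)], where p="[]" and q="[GS (e v a), GSs x, GSs (e v b)]"])
       (use sx gx ga gb in auto)
  have s5: "weq R G [GP v, GS (e v a), GSs x, GSs (e v b)] [GS (e v a), GSs x, GSs (e v b)]"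
    by (rule weq_ctx'[OF W_kp2c[of "e v a"], where p="[]" and q="[GSs x, GSs (e v b)]"])
       (use ea a gx gb in auto)
  have cb: "c (e v b) x = e v (b + d x)" using e_c[OF v, of b "d x"] xe by simp
  have s6: "weq R G [GS (e v a), GSs x, GSs (e v b)] [GS (e v a), GSs (e v (b + d x))]"
    by (rule weq_ctx'[OF W_kp2b[of "e v b" x], where p="[GS (e v a)]" and q="[]"])
       (use eb b x cb ga gx gS[OF v fun_nz_add[OF b]] in auto)
  show ?thesis unfolding NW_def
    using weq_trans[OF s1 weq_trans[OF s2 weq_trans[OF s3 weq_trans[OF s4 weq_trans[OF s5 s6]]]]] by simp
qed

lemma W1:
  assumes v: "v \<in> V" and a: "a \<noteq> 0" and b: "b \<noteq> 0" and k: "k \<noteq> 0"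
  shows "weq (R::'r::comm_ring_1 itself) G (NW v (a + k) (b + k)) (NW v a b)"
proof -
  note ea = e_props[OF v, of a] and eb = e_props[OF v, of b] and ek = e_props[OF v, of k]
  have ga: "GS (e v a) \<in> kp_gens G" "GSs (e v a) \<in> kp_gens G" using gS[OF v a] by auto
  have gb: "GS (e v b) \<in> kp_gens G" "GSs (e v b) \<in> kp_gens G" using gS[OF v b] by auto
  have gk: "GS (e v k) \<in> kp_gens G" "GSs (e v k) \<in> kp_gens G" using gS[OF v k] by auto
  have gbk: "GSs (e v (b + k)) \<in> kp_gens G" using gS[OF v fun_nz_add[OF b]] by auto
  have s1: "weq R G [GS (e v (a + k)), GSs (e v (b + k))] [GS (e v a), GS (e v k), GSs (e v (b + k))]"
    by (rule weq_ctx'[OF weq_sym[OF W_kp2a[of "e v a" "e v k"]], where p="[]" and q="[GSs (e v (b + k))]"])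
       (use ea ek a k e_c[OF v, of a k] gbk in auto)
  have s2: "weq R G [GS (e v a), GS (e v k), GSs (e v (b + k))] [GS (e v a), GS (e v k), GSs (e v k), GSs (e v b)]"
    by (rule weq_ctx'[OF weq_sym[OF W_kp2b[of "e v b" "e v k"]], where p="[GS (e v a), GS (e v k)]" and q="[]"])
       (use eb ek b k e_c[OF v, of b k] ga gk in auto)
  have s3: "weq R G [GS (e v a), GS (e v k), GSs (e v k), GSs (e v b)] [GS (e v a), GP v, GSs (e v b)]"
    by (rule weq_ctx'[OF weq_sym[OF W_kp4[OF v k]], where p="[GS (e v a)]" and q="[GSs (e v b)]"])
       (use ga gb in auto)
  have s4: "weq R G [GS (e v a), GP v, GSs (e v b)] [GS (e v a), GSs (e v b)]"
    by (rule weq_ctx'[OF W_kp2d[of "e v a"], where p="[]" and q="[GSs (e v b)]"])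
       (use ea a gb in auto)
  show ?thesis unfolding NW_def
    using weq_trans[OF s1 weq_trans[OF s2 weq_trans[OF s3 s4]]] by simp
qed

lemma W2:
  assumes v: "v \<in> V" and nz: "a \<noteq> 0" "b \<noteq> 0" "a' \<noteq> 0" "b' \<noteq> 0" and eq: "a + b' = a' + b"
  shows "weq (R::'r::comm_ring_1 itself) G (NW v a b) (NW v a' b')"
proof -
  have 1: "weq R G (NW v a b) (NW v (a + b') (b + b'))" using weq_sym[OF W1[OF v nz(1,2,4)]] .
  have 2: "weq R G (NW v (a' + b) (b' + b)) (NW v a' b')" using W1[OF v nz(3,4,2)] .
  show ?thesis using weq_trans[OF 1] 2 eq by (simp add: add.commute)
qed

end


fun comb :: "('a \<times> ('k \<Rightarrow> int)) option \<Rightarrow> ('a \<times> ('k \<Rightarrow> int)) option \<Rightarrow> ('a \<times> ('k \<Rightarrow> int)) option" where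
  "comb (Some (v, a)) (Some (w, b)) = (if v = w then Some (v, a + b) else None)"
| "comb _ _ = None"

lemma comb_None2[simp]: "comb x None = None" by (cases x) auto

lemma comb_assoc: "comb (comb x y) z = comb x (comb y z)"
  by (cases x; cases y; cases z) (auto simp: add.assoc)

definition iv :: "('k \<Rightarrow> nat) \<Rightarrow> 'k \<Rightarrow> int" where "iv a = (\<lambda>i. int (a i))"
definition pa :: "('k \<Rightarrow> int) \<Rightarrow> 'k \<Rightarrow> nat" where "pa m = (\<lambda>i. nat (m i) + 1)"
definition pb :: "('k \<Rightarrow> int) \<Rightarrow> 'k \<Rightarrow> nat" where "pb m = (\<lambda>i. nat (- m i) + 1)"
definition one :: "'k \<Rightarrow> nat" where "one = (\<lambda>_. 1)"

lemma pa_nz: "pa m \<noteq> 0" and pb_nz: "pb m \<noteq> 0" and one_nz: "one \<noteq> (0 :: 'k \<Rightarrow> nat)"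
  by (auto simp: pa_def pb_def one_def fun_eq_iff)

lemma pa_pb: "iv (pa m) - iv (pb m) = m"
  by (auto simp: iv_def pa_def pb_def fun_eq_iff)

lemma pa0: "pa 0 = one" and pb0: "pb 0 = one"
  by (auto simp: pa_def pb_def one_def fun_eq_iff)

context kgB
begin

fun mg :: "'a kpgen \<Rightarrow> ('a \<times> ('k \<Rightarrow> int)) option" where
  "mg (GP v) = Some (v, 0)"
| "mg (GS x) = Some (r x, iv (d x))"
| "mg (GSs x) = Some (r x, - iv (d x))"

fun mon :: "'a kpgen list \<Rightarrow> ('a \<times> ('k \<Rightarrow> int)) option" where
  "mon [] = None"
| "mon [g] = mg g"
| "mon (g # h # w) = comb (mg g) (mon (h # w))"

lemma mon_cons: "w \<noteq> [] \<Longrightarrow> mon (g # w) = comb (mg g) (mon w)"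
  by (cases w) auto

lemma mon_append: "u \<noteq> [] \<Longrightarrow> w \<noteq> [] \<Longrightarrow> mon (u @ w) = comb (mon u) (mon w)"
proof (induction u)
  case Nil then show ?case by simp
next
  case (Cons g u)
  show ?case
  proof (cases "u = []")
    case True then show ?thesis using Cons.prems by (simp add: mon_cons)
  next
    case False
    then show ?thesis using Cons by (simp add: mon_cons comb_assoc)
  qed
qed

definition N :: "'a \<Rightarrow> ('k \<Rightarrow> int) \<Rightarrow> 'a kpgen list" where
  "N v m = NW v (pa m) (pb m)"

lemma NW_N:
  assumes v: "v \<in> V" and a: "a \<noteq> 0" and b: "b \<noteq> 0" and m: "iv a - iv b = m"
  shows "weq (R::'r::comm_ring_1 itself) G (NW v a b) (N v m)"
  unfolding N_def
proof (rule W2[OF v a b pa_nz pb_nz])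
  show "a + pb m = pa m + b"
  proof (rule ext)
    fix i
    have "int (a i) - int (b i) = m i" using m by (auto simp: iv_def fun_eq_iff)
    then show "(a + pb m) i = (pa m + b) i" by (simp add: pa_def pb_def)
  qed
qed

lemma single_GP: assumes v: "v \<in> V" shows "weq (R::'r::comm_ring_1 itself) G [GP v] (NW v one one)"
  unfolding NW_def by (rule W_kp4[OF v one_nz])

lemma iv_add: "iv (a + b) = iv a + iv b" by (simp add: iv_def fun_eq_iff)

lemma step_all:
  assumes g: "g \<in> kp_gens G" and v: "v \<in> V" and a: "a \<noteq> 0" and b: "b \<noteq> 0"
  shows "case comb (mg g) (Some (v, iv a - iv b)) of
            None \<Rightarrow> wz (R::'r::comm_ring_1 itself) G (g # NW v a b)
          | Some (v', m') \<Rightarrow> v' \<in> V \<and> weq R G (g # NW v a b) (N v' m')"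
proof -
  consider (P) u where "g = GP u" "u \<in> V" | (S) x where "g = GS x" "x \<in> P" "d x \<noteq> 0"
    | (Ss) x where "g = GSs x" "x \<in> P" "d x \<noteq> 0"
    using g unfolding kp_gens_def by auto
  then show ?thesis
  proof cases
    case P
    show ?thesis
    proof (cases "u = v")
      case True
      have "weq R G (g # NW v a b) (N v (iv a - iv b))"
        using weq_trans[OF StepP_eq[OF v a b] NW_N[OF v a b refl]] P True by simp
      then show ?thesis using P True v by simp
    next
      case False
      then show ?thesis using StepP_ne[OF v a b P(2) False] P by simp
    qed
  next
    case S
    show ?thesis
    proof (cases "r x = v")
      case True
      have "weq R G (g # NW v a b) (N v (iv (d x) + (iv a - iv b)))"
      proof -
        have m: "iv (d x + a) - iv b = iv (d x) + (iv a - iv b)" by (simp add: iv_add)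
        show ?thesis using weq_trans[OF StepS_eq[OF v a b S(2,3) True] NW_N[OF v fun_nz_add2[OF a] b m]] S by simp
      qed
      then show ?thesis using S True v by simp
    next
      case False
      then show ?thesis using StepS_ne[OF v a b S(2,3) False] S by simp
    qed
  next
    case Ss
    show ?thesis
    proof (cases "r x = v")
      case True
      have "weq R G (g # NW v a b) (N v (- iv (d x) + (iv a - iv b)))"
      proof -
        have m: "iv a - iv (b + d x) = - iv (d x) + (iv a - iv b)" by (simp add: iv_add)
        show ?thesis using weq_trans[OF StepSs_eq[OF v a b Ss(2,3) True] NW_N[OF v a fun_nz_add[OF b] m]] Ss by simp
      qed
      then show ?thesis using Ss True v by simp
    next
      case False
      then show ?thesis using StepSs_ne[OF v a b Ss(2,3) False] Ss by simp
    qed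
  qed
qed

lemma NF:
  assumes "set w \<subseteq> kp_gens G" "w \<noteq> []"
  shows "case mon w of None \<Rightarrow> wz (R::'r::comm_ring_1 itself) G w
          | Some (v, m) \<Rightarrow> v \<in> V \<and> weq R G w (N v m)"
  using assms
proof (induction w)
  case Nil then show ?case by simp
next
  case (Cons g w)
  have g: "g \<in> kp_gens G" and ws: "set w \<subseteq> kp_gens G" using Cons.prems by auto
  show ?case
  proof (cases "w = []")
    case True
    consider (P) u where "g = GP u" "u \<in> V" | (S) x where "g = GS x" "x \<in> P" "d x \<noteq> 0"
      | (Ss) x where "g = GSs x" "x \<in> P" "d x \<noteq> 0"
      using g unfolding kp_gens_def by auto
    then show ?thesis
    proof cases
      case P
      have "weq R G [GP u] (N u 0)"
        using single_GP[OF P(2)] unfolding N_def pa0 pb0 .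
      then show ?thesis using True P by simp
    next
      case S
      have v: "r x \<in> V" using r_vert[OF S(2)] .
      have gv: "GP (r x) \<in> kp_gens G" using gP[OF v] .
      have 1: "weq R G [g] ([g] @ [GP (r x)] @ [])"
        using weq_sym[OF W_kp2d[OF S(2,3)]] rs_eq[OF S(2)] S(1) by simp
      have 2: "weq R G ([g] @ [GP (r x)] @ []) ([g] @ NW (r x) one one @ [])"
        by (rule weq_ctx[OF single_GP[OF v]]) (use g in \<open>auto simp: NW_def\<close>)
      have 3: "case comb (mg g) (Some (r x, iv one - iv one)) of
            None \<Rightarrow> wz R G (g # NW (r x) one one)
          | Some (v', m') \<Rightarrow> v' \<in> V \<and> weq R G (g # NW (r x) one one) (N v' m')"
        by (rule step_all[OF g v one_nz one_nz])
      then show ?thesis using weq_trans[OF 1 2] True S v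
        by (auto intro: weq_trans)
    next
      case Ss
      have v: "r x \<in> V" using r_vert[OF Ss(2)] .
      have 1: "weq R G [g] ([g] @ [GP (r x)] @ [])"
        using weq_sym[OF W_kp2f[OF Ss(2,3)]] Ss(1) by simp
      have 2: "weq R G ([g] @ [GP (r x)] @ []) ([g] @ NW (r x) one one @ [])"
        by (rule weq_ctx[OF single_GP[OF v]]) (use g in \<open>auto simp: NW_def\<close>)
      have 3: "case comb (mg g) (Some (r x, iv one - iv one)) of
            None \<Rightarrow> wz R G (g # NW (r x) one one)
          | Some (v', m') \<Rightarrow> v' \<in> V \<and> weq R G (g # NW (r x) one one) (N v' m')"
        by (rule step_all[OF g v one_nz one_nz])
      then show ?thesis using weq_trans[OF 1 2] True Ss v
        by (auto intro: weq_trans)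
    qed
  next
    case False
    have IH: "case mon w of None \<Rightarrow> wz R G w | Some (v, m) \<Rightarrow> v \<in> V \<and> weq R G w (N v m)"
      using Cons.IH[OF ws False] .
    have mc: "mon (g # w) = comb (mg g) (mon w)" by (rule mon_cons[OF False])
    show ?thesis
    proof (cases "mon w")
      case None
      then have "wz R G ([g] @ w @ [])" using IH by (intro wz_ctx) (use g False in auto)
      then show ?thesis using mc None by simp
    next
      case (Some p)
      obtain v m where p: "p = (v, m)" by (cases p)
      have v: "v \<in> V" and wN: "weq R G w (N v m)" using IH Some p by auto
      have 1: "weq R G ([g] @ w @ []) ([g] @ N v m @ [])"
        by (rule weq_ctx[OF wN False]) (use g in \<open>auto simp: N_def NW_def\<close>)
      have 3: "case comb (mg g) (Some (v, iv (pa m) - iv (pb m))) of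
            None \<Rightarrow> wz R G (g # NW v (pa m) (pb m))
          | Some (v', m') \<Rightarrow> v' \<in> V \<and> weq R G (g # NW v (pa m) (pb m)) (N v' m')"
        by (rule step_all[OF g v pa_nz pb_nz])
      then show ?thesis using 1 mc Some p unfolding pa_pb N_def[symmetric]
        by (auto split: option.splits intro: weq_trans weq_wz)
    qed
  qed
qed

end


lemma lsum_super:
  assumes "finite S" "{m1. F v m1 \<noteq> 0} \<subseteq> S"
  shows "lsum_mult F H v m = (\<Sum>m1\<in>S. F v m1 * H v (m - m1))"
  unfolding lsum_mult_def by (rule sum.mono_neutral_left) (use assms in auto)

lemma lsum_fin: "F \<in> lsum_carrier R G \<Longrightarrow> finite {m. F v m \<noteq> 0}"
proof -
  assume "F \<in> lsum_carrier R G"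
  then have f: "finite {(v, m). F v m \<noteq> 0}" unfolding lsum_carrier_def by simp
  have "{m. F v m \<noteq> 0} = Pair v -` {(v, m). F v m \<noteq> 0}" by auto
  then show ?thesis using finite_vimageI[OF f, of "Pair v"] by (simp add: inj_on_def)
qed

lemma lsum_mult_comm:
  assumes F: "finite {m. F v m \<noteq> 0}" and H: "finite {m. H v m \<noteq> 0}"
  shows "lsum_mult F H v m = lsum_mult H F v (m :: 'k \<Rightarrow> int)"
proof -
  define T1 where "T1 = {m1. F v m1 \<noteq> 0 \<and> H v (m - m1) \<noteq> 0}"
  define T2 where "T2 = {m2. H v m2 \<noteq> 0 \<and> F v (m - m2) \<noteq> 0}"
  have "lsum_mult F H v m = (\<Sum>m1\<in>T1. F v m1 * H v (m - m1))"
    unfolding lsum_mult_def T1_def by (rule sum.mono_neutral_right) (use F in auto)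
  also have "\<dots> = (\<Sum>m2\<in>T2. H v m2 * F v (m - m2))"
    by (rule sum.reindex_bij_witness[where i="\<lambda>x. m - x" and j="\<lambda>x. m - x"])
       (auto simp: T1_def T2_def mult.commute)
  also have "\<dots> = lsum_mult H F v m"
    unfolding lsum_mult_def T2_def by (rule sum.mono_neutral_left) (use H in auto)
  finally show ?thesis .
qed

lemma D_imp_A:
  assumes "is_kgraph G" "kp_laurent_iso (R::'r::comm_ring_1 itself) G"
  shows "kp_commutative R G"
proof -
  obtain \<phi> where im: "\<phi> ` fa_carrier R G = lsum_carrier R G"
    and ad: "\<forall>f\<in>fa_carrier R G. \<forall>g\<in>fa_carrier R G. \<phi> (f + g) = \<phi> f + \<phi> g"
    and sm: "\<forall>c. \<forall>f\<in>fa_carrier R G. \<phi> (\<lambda>w. c * f w) = (\<lambda>v m. c * \<phi> f v m)"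
    and mu: "\<forall>f\<in>fa_carrier R G. \<forall>g\<in>fa_carrier R G. \<phi> (fa_mult f g) = lsum_mult (\<phi> f) (\<phi> g)"
    and ke: "\<forall>f\<in>fa_carrier R G. \<phi> f = 0 \<longleftrightarrow> f \<in> kp_ideal R G"
    using assms(2) unfolding kp_laurent_iso_def by blast
  show ?thesis unfolding kp_commutative_def
  proof (intro ballI)
    fix f g assume f: "f \<in> fa_carrier R G" and g: "g \<in> fa_carrier R G"
    have fg: "fa_mult f g \<in> fa_carrier R G" and gf: "fa_mult g f \<in> fa_carrier R G"
      using carrier_mult f g by auto
    have ngf: "(\<lambda>w. (- 1) * fa_mult g f w) \<in> fa_carrier R G" using carrier_smult[OF gf] .
    have h: "fa_mult f g - fa_mult g f = fa_mult f g + (\<lambda>w. (- 1) * fa_mult g f w)"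
      by (simp add: fun_eq_iff)
    have Ff: "\<phi> f \<in> lsum_carrier R G" and Fg: "\<phi> g \<in> lsum_carrier R G" using im f g by auto
    have "\<phi> (fa_mult f g - fa_mult g f) = lsum_mult (\<phi> f) (\<phi> g) + (\<lambda>v m. (- 1) * lsum_mult (\<phi> g) (\<phi> f) v m)"
    proof -
      have 1: "\<phi> (fa_mult f g + (\<lambda>w. (- 1) * fa_mult g f w)) = \<phi> (fa_mult f g) + \<phi> (\<lambda>w. (- 1) * fa_mult g f w)"
        using ad fg ngf by blast
      have 2: "\<phi> (\<lambda>w. (- 1) * fa_mult g f w) = (\<lambda>v m. (- 1) * \<phi> (fa_mult g f) v m)" using sm gf by blast
      have 3: "\<phi> (fa_mult f g) = lsum_mult (\<phi> f) (\<phi> g)" "\<phi> (fa_mult g f) = lsum_mult (\<phi> g) (\<phi> f)"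
        using mu f g by auto
      show ?thesis unfolding h 1 2 3 ..
    qed
    also have "\<dots> = 0"
    proof (rule ext, rule ext)
      fix v m
      have "lsum_mult (\<phi> f) (\<phi> g) v m = lsum_mult (\<phi> g) (\<phi> f) v m"
        by (rule lsum_mult_comm[where F="\<phi> f" and H="\<phi> g" and v=v and m=m, OF lsum_fin[OF Ff] lsum_fin[OF Fg]])
      then show "(lsum_mult (\<phi> f) (\<phi> g) + (\<lambda>v m. (- 1) * lsum_mult (\<phi> g) (\<phi> f) v m)) v m = 0 v m"
        by simp
    qed
    finally show "fa_mult f g - fa_mult g f \<in> kp_ideal R G"
      using ke carrier_diff[OF fg gf] by blast
  qed
qed

context kg
begin

lemma C_imp_B:
  assumes iso: "kg_iso G (disj_union_Nk (vertices G))"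
  shows "(\<forall>x\<in>P. r x = s x) \<and> (\<forall>n. inj_on r {x \<in> P. d x = n})"
proof -
  let ?H = "disj_union_Nk (vertices G)"
  obtain \<phi> where bij: "bij_betw \<phi> P (paths ?H)"
    and pr: "\<forall>x\<in>P. deg ?H (\<phi> x) = d x \<and> rng ?H (\<phi> x) = \<phi> (r x) \<and> src ?H (\<phi> x) = \<phi> (s x)"
    using iso unfolding kg_iso_def by blast
  have inj: "inj_on \<phi> P" using bij bij_betw_def by blast
  have rs: "rng ?H = src ?H" by (simp add: disj_union_Nk_def)
  have A: "r x = s x" if x: "x \<in> P" for x
  proof -
    have "\<phi> (r x) = \<phi> (s x)" using pr x rs by metis
    then show ?thesis using inj r_in[OF x] s_in[OF x] unfolding inj_on_def by blast
  qed
  have B: "inj_on r {x \<in> P. d x = n}" for n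
  proof
    fix x y assume x: "x \<in> {x \<in> P. d x = n}" and y: "y \<in> {x \<in> P. d x = n}" and e: "r x = r y"
    have fx: "\<phi> x = (fst (\<phi> (r x)), d x)"
    proof -
      have "snd (\<phi> x) = d x" using pr x by (simp add: disj_union_Nk_def)
      moreover have "fst (\<phi> (r x)) = fst (\<phi> x)"
      proof -
        have "(fst (\<phi> x), 0) = \<phi> (r x)" using pr x by (simp add: disj_union_Nk_def split_beta)
        then show ?thesis by (metis fst_conv)
      qed
      ultimately show ?thesis by (metis prod.collapse)
    qed
    have fy: "\<phi> y = (fst (\<phi> (r y)), d y)"
    proof -
      have "snd (\<phi> y) = d y" using pr y by (simp add: disj_union_Nk_def)
      moreover have "fst (\<phi> (r y)) = fst (\<phi> y)"
      proof -
        have "(fst (\<phi> y), 0) = \<phi> (r y)" using pr y by (simp add: disj_union_Nk_def split_beta)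
        then show ?thesis by (metis fst_conv)
      qed
      ultimately show ?thesis by (metis prod.collapse)
    qed
    have "\<phi> x = \<phi> y" using fx fy e x y by simp
    then show "x = y" using inj x y unfolding inj_on_def by blast
  qed
  show ?thesis using A B by blast
qed

lemma B_imp_C:
  assumes rs: "\<forall>x\<in>P. r x = s x" and inj: "\<forall>n. inj_on r {x \<in> P. d x = n}" and ns: "no_sources G"
  shows "kg_iso G (disj_union_Nk (vertices G))"
  unfolding kg_iso_def
proof (intro exI conjI ballI impI)
  let ?H = "disj_union_Nk (vertices G)"
  define \<phi> where "\<phi> x = (r x, d x)" for x
  show "bij_betw \<phi> P (paths ?H)"
    unfolding bij_betw_def
  proof
    show "inj_on \<phi> P"
      using inj unfolding inj_on_def \<phi>_def by auto
    show "\<phi> ` P = paths ?H"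
    proof (rule set_eqI)
      fix p
      show "p \<in> \<phi> ` P \<longleftrightarrow> p \<in> paths ?H"
      proof
        assume "p \<in> \<phi> ` P" then show "p \<in> paths ?H"
          using r_vert unfolding \<phi>_def disj_union_Nk_def by auto
      next
        assume "p \<in> paths ?H"
        then obtain v n where p: "p = (v, n)" "v \<in> vertices G" unfolding disj_union_Nk_def by auto
        then obtain x where "x \<in> P" "d x = n" "r x = v" using ns unfolding no_sources_def by blast
        then show "p \<in> \<phi> ` P" using p unfolding \<phi>_def by auto
      qed
    qed
  qed
  fix x assume x: "x \<in> P"
  show "deg ?H (\<phi> x) = d x" unfolding \<phi>_def disj_union_Nk_def by simp
  show "rng ?H (\<phi> x) = \<phi> (r x)" unfolding \<phi>_def disj_union_Nk_def using rr[OF x] dr[OF x] by simp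
  show "src ?H (\<phi> x) = \<phi> (s x)" unfolding \<phi>_def disj_union_Nk_def using rs x rs[rule_format, OF x] ss[OF x] ds[OF x]
    by (simp add: rs[rule_format, OF s_in[OF x], symmetric])
next
  fix x y assume x: "x \<in> P" and y: "y \<in> P" and e: "s x = r y"
  show "(\<lambda>x. (r x, d x)) (c x y) = cmp (disj_union_Nk (vertices G)) ((\<lambda>x. (r x, d x)) x) ((\<lambda>x. (r x, d x)) y)"
    using r_c[OF x y e] d_c[OF x y e] by (simp add: disj_union_Nk_def)
qed

end


lemma comb_ind:
  assumes M: "finite M" and x: "\<And>p. x = Some p \<Longrightarrow> snd p \<in> M"
  shows "(\<Sum>m1\<in>M. (if x = Some (v, m1) then 1 else 0) * (if y = Some (v, m - m1) then 1 else 0))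
         = (if comb x y = Some (v, m) then (1::'r::comm_ring_1) else 0)"
proof (cases x)
  case None then show ?thesis by simp
next
  case (Some p)
  obtain v' a where p: "p = (v', a)" by (cases p)
  have aM: "a \<in> M" using x Some p by auto
  show ?thesis
  proof (cases "v' = v")
    case False
    have "comb x y \<noteq> Some (v, m)" using Some p False by (cases y) (auto split: if_splits)
    then show ?thesis using Some p False by simp
  next
    case True
    have "(\<Sum>m1\<in>M. (if x = Some (v, m1) then 1 else 0) * (if y = Some (v, m - m1) then 1 else 0))
        = (\<Sum>m1\<in>M. if a = m1 then (if y = Some (v, m - m1) then 1 else 0) else (0::'r))"
      by (rule sum.cong) (use Some p True in auto)
    also have "\<dots> = (if y = Some (v, m - a) then 1 else 0)"
      using sum.delta'[OF M, of a "\<lambda>m1. (if y = Some (v, m - m1) then 1 else (0::'r))"] aM by simp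
    also have "\<dots> = (if comb x y = Some (v, m) then 1 else 0)"
      using Some p True by (cases y) (auto simp: algebra_simps split: if_splits)
    finally show ?thesis .
  qed
qed

context kgB
begin

definition Kphi :: "'a kpgen list \<Rightarrow> 'a \<times> ('k \<Rightarrow> int) \<Rightarrow> 'r::comm_ring_1" where
  "Kphi w p = (if mon w = Some p then 1 else 0)"

definition phi :: "('a kpgen list \<Rightarrow> 'r::comm_ring_1) \<Rightarrow> 'a \<Rightarrow> ('k \<Rightarrow> int) \<Rightarrow> 'r" where
  "phi f = (\<lambda>v m. lin Kphi f (v, m))"

lemma cfin: "f \<in> fa_carrier R G \<Longrightarrow> finite {w. f w \<noteq> 0}"
  by (simp add: carrier_iff)

lemma phi_add:
  assumes "f \<in> fa_carrier R G" "g \<in> fa_carrier R G"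
  shows "phi (f + g) = phi f + phi g"
  unfolding phi_def by (rule ext, rule ext) (simp add: lin_add[OF cfin[OF assms(1)] cfin[OF assms(2)]])

lemma phi_smult:
  assumes "f \<in> fa_carrier R G"
  shows "phi (\<lambda>w. cc * f w) = (\<lambda>v m. cc * phi f v m)"
  unfolding phi_def by (rule ext, rule ext) (simp add: lin_smult[OF cfin[OF assms(1)]])

lemma phi_expand:
  assumes "f \<in> fa_carrier R G"
  shows "phi f v m = (\<Sum>u\<in>{w. f w \<noteq> 0}. f u * (if mon u = Some (v, m) then 1 else 0))"
  unfolding phi_def lin_def Kphi_def ..

lemma phi_nz:
  assumes "f \<in> fa_carrier R G" "phi f v m \<noteq> 0"
  shows "\<exists>u. f u \<noteq> 0 \<and> mon u = Some (v, m)"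
proof (rule ccontr)
  assume "\<not> ?thesis"
  then have "\<forall>u\<in>{w. f w \<noteq> 0}. f u * (if mon u = Some (v, m) then 1 else 0) = 0" by auto
  then show False using assms phi_expand[OF assms(1)] by simp
qed

lemma mon_V:
  assumes "f \<in> fa_carrier (R::'r::comm_ring_1 itself) G" "f u \<noteq> 0" "mon u = Some (v, m)"
  shows "v \<in> V"
proof -
  have "set u \<subseteq> kp_gens G" "u \<noteq> []" using assms(1,2) unfolding carrier_iff by auto
  from NF[OF this, where R=R] show ?thesis using assms(3) by simp
qed

lemma phi_mult:
  assumes f: "f \<in> fa_carrier R G" and g: "g \<in> fa_carrier R G"
  shows "phi (fa_mult f g) = lsum_mult (phi f) (phi g)"
proof (rule ext, rule ext)
  fix v m
  define A where "A = {w. f w \<noteq> 0}"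
  define B where "B = {w. g w \<noteq> 0}"
  define M where "M = (\<lambda>u. snd (the (mon u))) ` A"
  have Af: "finite A" and Bf: "finite B" using f g unfolding A_def B_def carrier_iff by auto
  have Mf: "finite M" unfolding M_def using Af by simp
  have Ane: "u \<noteq> []" if "u \<in> A" for u using that f unfolding A_def carrier_iff by auto
  have Bne: "w \<noteq> []" if "w \<in> B" for w using that g unfolding B_def carrier_iff by auto
  have xM: "snd p \<in> M" if "u \<in> A" "mon u = Some p" for u p
    unfolding M_def using that by force
  have "phi (fa_mult f g) v m = (\<Sum>u\<in>A. \<Sum>w\<in>B. f u * g w * Kphi (u @ w) (v, m))"
    unfolding phi_def by (rule lin_mult) (use Af Bf in \<open>auto simp: A_def B_def\<close>)
  also have "\<dots> = (\<Sum>u\<in>A. \<Sum>w\<in>B. f u * g w *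
      (\<Sum>m1\<in>M. (if mon u = Some (v, m1) then 1 else 0) * (if mon w = Some (v, m - m1) then 1 else 0)))"
  proof (rule sum.cong[OF refl], rule sum.cong[OF refl])
    fix u w assume u: "u \<in> A" and w: "w \<in> B"
    show "f u * g w * Kphi (u @ w) (v, m) = f u * g w *
      (\<Sum>m1\<in>M. (if mon u = Some (v, m1) then 1 else 0) * (if mon w = Some (v, m - m1) then 1 else 0))"
      by (simp only: comb_ind[OF Mf xM[OF u]] Kphi_def mon_append[OF Ane[OF u] Bne[OF w]])
  qed
  also have "\<dots> = (\<Sum>m1\<in>M. \<Sum>u\<in>A. \<Sum>w\<in>B. (f u * (if mon u = Some (v, m1) then 1 else 0)) *
                       (g w * (if mon w = Some (v, m - m1) then 1 else 0)))"
    by (simp add: sum_distrib_left sum.swap[of _ M] algebra_simps)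
  also have "\<dots> = (\<Sum>m1\<in>M. phi f v m1 * phi g v (m - m1))"
    unfolding phi_expand[OF f] phi_expand[OF g] A_def[symmetric] B_def[symmetric]
    by (simp add: sum_product)
  also have "\<dots> = lsum_mult (phi f) (phi g) v m"
  proof (rule lsum_super[symmetric, OF Mf])
    show "{m1. phi f v m1 \<noteq> 0} \<subseteq> M"
    proof
      fix m1 assume "m1 \<in> {m1. phi f v m1 \<noteq> 0}"
      then obtain u where "f u \<noteq> 0" "mon u = Some (v, m1)" using phi_nz[OF f] by blast
      then show "m1 \<in> M" using xM[of u "(v, m1)"] unfolding A_def by auto
    qed
  qed
  finally show "phi (fa_mult f g) v m = lsum_mult (phi f) (phi g) v m" .
qed

end


lemma ideal_sum: "finite A \<Longrightarrow> (\<forall>u\<in>A. F u \<in> kp_ideal R G) \<Longrightarrow> (\<Sum>u\<in>A. F u) \<in> kp_ideal R G"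
  by (induction A rule: finite_induct) (auto intro: kp_ideal.add kp_ideal.zero)

context kgB
begin

lemma mon_N: "v \<in> V \<Longrightarrow> mon (N v m) = Some (v, m)"
  unfolding N_def NW_def using e_props[of v] pa_pb[of m] by simp

lemma N_props: "v \<in> V \<Longrightarrow> N v m \<noteq> [] \<and> set (N v m) \<subseteq> kp_gens G"
  unfolding N_def NW_def using gS[OF _ pa_nz] gS[OF _ pb_nz] by auto

lemma N_inj:
  assumes "v \<in> V" "v' \<in> V" "N v m = N v' m'"
  shows "v = v' \<and> m = m'"
proof -
  have 1: "e v (pa m) = e v' (pa m')" "e v (pb m) = e v' (pb m')" using assms(3) unfolding N_def NW_def by auto
  have "v = v'" using 1(1) e_props[OF assms(1)] e_props[OF assms(2)] by metis
  moreover have "pa m = pa m'" "pb m = pb m'" using 1 e_props[OF assms(1)] e_props[OF assms(2)] by metis+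
  ultimately show ?thesis using pa_pb[of m] pa_pb[of m'] by metis
qed

lemma phi_carrier:
  assumes f: "f \<in> fa_carrier (R::'r::comm_ring_1 itself) G"
  shows "phi f \<in> lsum_carrier R G"
proof -
  have sub: "{(v, m). phi f v m \<noteq> 0} \<subseteq> the ` mon ` {w. f w \<noteq> 0}"
  proof
    fix p assume "p \<in> {(v, m). phi f v m \<noteq> 0}"
    then obtain v m where p: "p = (v, m)" "phi f v m \<noteq> 0" by auto
    then obtain u where "f u \<noteq> 0" "mon u = Some (v, m)" using phi_nz[OF f] by blast
    then show "p \<in> the ` mon ` {w. f w \<noteq> 0}" using p by (auto intro!: image_eqI[where x="mon u"])
  qed
  have "finite {(v, m). phi f v m \<noteq> 0}"
    by (rule finite_subset[OF sub]) (use cfin[OF f] in simp)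
  moreover have "v \<in> V" if h: "phi f v m \<noteq> 0" for v m
  proof -
    obtain u where "f u \<noteq> 0" "mon u = Some (v, m)" using phi_nz[OF f h] by blast
    then show ?thesis using mon_V[OF f] by blast
  qed
  ultimately show ?thesis unfolding lsum_carrier_def by blast
qed

lemma phi_surj:
  assumes F: "F \<in> lsum_carrier (R::'r::comm_ring_1 itself) G"
  shows "\<exists>f\<in>fa_carrier R G. phi f = F"
proof -
  define T where "T = {(v, m). F v m \<noteq> 0}"
  have Tf: "finite T" using F unfolding lsum_carrier_def T_def by simp
  have TV: "fst p \<in> V" if "p \<in> T" for p using that F unfolding lsum_carrier_def T_def by auto
  define h where "h p = (\<lambda>w. F (fst p) (snd p) * wd (N (fst p) (snd p)) w)" for p
  define f where "f = (\<Sum>p\<in>T. h p)"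
  have hc: "h p \<in> fa_carrier R G" if "p \<in> T" for p
    unfolding h_def by (rule carrier_smult, rule carrier_wd) (use N_props[OF TV[OF that]] in auto)
  have fc: "f \<in> fa_carrier R G" unfolding f_def by (rule carrier_sum) (use hc in blast)
  have hfin: "\<forall>p\<in>T. finite {w. h p w \<noteq> 0}" using hc cfin by blast
  have "phi f = F"
  proof (rule ext, rule ext)
    fix v m
    have "phi f v m = (\<Sum>p\<in>T. lin Kphi (h p) (v, m))"
      unfolding phi_def f_def by (rule lin_sum[OF Tf hfin])
    also have "\<dots> = (\<Sum>p\<in>T. if p = (v, m) then F v m else 0)"
    proof (rule sum.cong[OF refl])
      fix p assume p: "p \<in> T"
      have "lin Kphi (h p) (v, m) = F (fst p) (snd p) * Kphi (N (fst p) (snd p)) (v, m)"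
        unfolding h_def using lin_smult[OF wd_fin] lin_wd by metis
      also have "\<dots> = (if p = (v, m) then F v m else 0)"
        using mon_N[OF TV[OF p]] by (auto simp: Kphi_def)
      finally show "lin Kphi (h p) (v, m) = (if p = (v, m) then F v m else 0)" .
    qed
    also have "\<dots> = F v m" using Tf by (simp add: T_def)
    finally show "phi f v m = F v m" .
  qed
  then show ?thesis using fc by blast
qed

lemma phi_eq0: "mon u = mon u' \<Longrightarrow> phi (wd u - wd u' :: _ \<Rightarrow> 'r::comm_ring_1) = 0"
  unfolding phi_def by (rule ext, rule ext) (simp add: lin_wd_diff Kphi_def)

lemma phi_none0: "mon u = None \<Longrightarrow> phi (wd u - 0 :: _ \<Rightarrow> 'r::comm_ring_1) = 0"
  unfolding phi_def by (rule ext, rule ext) (simp add: lin_wd Kphi_def)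

lemma phi_zero: "phi (0 :: _ \<Rightarrow> 'r::comm_ring_1) = 0"
  unfolding phi_def by (rule ext, rule ext) (simp add: lin_zero)

lemma lsum_mult_0: "lsum_mult F 0 = 0" "lsum_mult 0 F = 0"
  unfolding lsum_mult_def by (auto simp: fun_eq_iff)

lemma phi_ideal:
  assumes "f \<in> kp_ideal (R::'r::comm_ring_1 itself) G"
  shows "phi f = 0"
  using assms
proof induction
  case (rel f)
  from rel show ?case
  proof (cases rule: rels_cases)
    case (kp1 v w)
    show ?thesis
    proof (cases "v = w")
      case True
      have "mon [GP v, GP w] = mon [GP v]" using True by simp
      then show ?thesis unfolding kp1(3) if_P[OF True] by (rule phi_eq0)
    next
      case False
      have "mon [GP v, GP w] = None" using False by simp
      then show ?thesis unfolding kp1(3) if_not_P[OF False] by (rule phi_none0)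
    qed
  next
    case (kp2a x y)
    have "mon [GS x, GS y] = mon [GS (c x y)]"
      using kp2a r_c[of x y] d_c[of x y] rs_eq by (simp add: iv_add)
    then show ?thesis unfolding kp2a(6) by (rule phi_eq0)
  next
    case (kp2b x y)
    have "mon [GSs y, GSs x] = mon [GSs (c x y)]"
      using kp2b r_c[of x y] d_c[of x y] rs_eq by (simp add: iv_add algebra_simps)
    then show ?thesis unfolding kp2b(6) by (rule phi_eq0)
  next
    case (kp2c x)
    have "mon [GP (r x), GS x] = mon [GS x]" by simp
    then show ?thesis unfolding kp2c(3) by (rule phi_eq0)
  next
    case (kp2d x)
    have "mon [GS x, GP (s x)] = mon [GS x]" using rs_eq[OF kp2d(1)] by simp
    then show ?thesis unfolding kp2d(3) by (rule phi_eq0)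
  next
    case (kp2e x)
    have "mon [GP (s x), GSs x] = mon [GSs x]" using rs_eq[OF kp2e(1)] by simp
    then show ?thesis unfolding kp2e(3) by (rule phi_eq0)
  next
    case (kp2f x)
    have "mon [GSs x, GP (r x)] = mon [GSs x]" by simp
    then show ?thesis unfolding kp2f(3) by (rule phi_eq0)
  next
    case (kp3 x y)
    show ?thesis
    proof (cases "x = y")
      case True
      have "mon [GSs x, GS y] = mon [GP (s x)]" using True rs_eq[OF kp3(1)] by simp
      then show ?thesis unfolding kp3(6) if_P[OF True] by (rule phi_eq0)
    next
      case False
      have "r x \<noteq> r y" using False e_uniq kp3 by blast
      then have "mon [GSs x, GS y] = None" by simp
      then show ?thesis unfolding kp3(6) if_not_P[OF False] by (rule phi_none0)
    qed
  next
    case (kp4 v n)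
    have "f = wd [GP v] - wd [GS (e v n), GSs (e v n)]" unfolding kp4(3) L_single[OF kp4(1)] by simp
    moreover have "mon [GP v] = mon [GS (e v n), GSs (e v n)]" using e_props[OF kp4(1)] by simp
    ultimately show ?thesis using phi_eq0 by metis
  qed
next
  case zero then show ?case by (rule phi_zero)
next
  case (add f g)
  have e: "phi (f + g) = phi f + phi g" by (rule phi_add[OF ideal_carrier[OF kg add(1)] ideal_carrier[OF kg add(2)]])
  show ?case unfolding e add.IH by simp
next
  case (smult f a)
  then show ?case using phi_smult[OF ideal_carrier[OF kg smult(1)], of a] by (simp add: fun_eq_iff)
next
  case (lmult f h)
  have e: "phi (fa_mult h f) = lsum_mult (phi h) (phi f)" by (rule phi_mult[OF lmult(2) ideal_carrier[OF kg lmult(1)]])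
  show ?case unfolding e lmult.IH by (rule lsum_mult_0(1))
next
  case (rmult f h)
  have e: "phi (fa_mult f h) = lsum_mult (phi f) (phi h)" by (rule phi_mult[OF ideal_carrier[OF kg rmult(1)] rmult(2)])
  show ?case unfolding e rmult.IH by (rule lsum_mult_0(2))
qed

definition nfw :: "'a kpgen list \<Rightarrow> 'a kpgen list \<Rightarrow> 'r::comm_ring_1" where
  "nfw u = (case mon u of None \<Rightarrow> 0 | Some (v, m) \<Rightarrow> wd (N v m))"

lemma nfw_ideal:
  assumes "set u \<subseteq> kp_gens G" "u \<noteq> []"
  shows "(wd u - nfw u :: _ \<Rightarrow> 'r::comm_ring_1) \<in> kp_ideal (R::'r itself) G"
  using NF[OF assms, where R=R] unfolding nfw_def weq_def wz_def
  by (auto split: option.splits)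

lemma phi_kernel:
  assumes f: "f \<in> fa_carrier (R::'r::comm_ring_1 itself) G" and z: "phi f = 0"
  shows "f \<in> kp_ideal R G"
proof -
  define A where "A = {w. f w \<noteq> 0}"
  have Af: "finite A" using cfin[OF f] unfolding A_def .
  have Ag: "set u \<subseteq> kp_gens G \<and> u \<noteq> []" if "u \<in> A" for u
    using that f unfolding A_def carrier_iff by auto
  define D where "D = (\<Sum>u\<in>A. (\<lambda>w. f u * (wd u - nfw u) w))"
  have DI: "D \<in> kp_ideal R G"
    unfolding D_def by (rule ideal_sum[OF Af]) (use nfw_ideal Ag kp_ideal.smult in blast)
  have "D = f"
  proof (rule ext)
    fix t
    have "D t = (\<Sum>u\<in>A. f u * wd u t) - (\<Sum>u\<in>A. f u * nfw u t)"
      unfolding D_def sum_fun_apply by (simp add: sum_subtractf right_diff_distrib)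
    also have "(\<Sum>u\<in>A. f u * wd u t) = f t"
    proof -
      have "(\<Sum>u\<in>A. f u * wd u t) = (\<Sum>u\<in>A. if t = u then f t else 0)"
        by (rule sum.cong) (auto simp: wd_def)
      also have "\<dots> = f t" using Af by (simp add: A_def)
      finally show ?thesis .
    qed
    also have "(\<Sum>u\<in>A. f u * nfw u t) = 0"
    proof (cases "\<exists>v m. v \<in> V \<and> t = N v m")
      case True
      then obtain v m where vm: "v \<in> V" "t = N v m" by blast
      have "(\<Sum>u\<in>A. f u * nfw u t) = (\<Sum>u\<in>A. f u * (if mon u = Some (v, m) then 1 else 0))"
      proof (rule sum.cong[OF refl])
        fix u assume u: "u \<in> A"
        show "f u * nfw u t = f u * (if mon u = Some (v, m) then 1 else 0)"
        proof (cases "mon u")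
          case None then show ?thesis by (simp add: nfw_def)
        next
          case (Some p)
          obtain v' m' where p: "p = (v', m')" by (cases p)
          have v': "v' \<in> V" using mon_V[OF f, of u v' m'] u Some p unfolding A_def by auto
          have "(N v' m' = N v m) = ((v', m') = (v, m))" using N_inj[OF v' vm(1)] by auto
          then show ?thesis using Some p vm by (auto simp: nfw_def wd_def)
        qed
      qed
      also have "\<dots> = phi f v m" using phi_expand[OF f] unfolding A_def by simp
      finally show ?thesis using z by simp
    next
      case False
      have "nfw u t = (0::'r)" if u: "u \<in> A" for u
      proof (cases "mon u")
        case None then show ?thesis by (simp add: nfw_def)
      next
        case (Some p)
        obtain v' m' where p: "p = (v', m')" by (cases p)
        have v': "v' \<in> V" using mon_V[OF f, of u v' m'] u Some p unfolding A_def by auto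
        then show ?thesis using False Some p by (auto simp: nfw_def wd_def)
      qed
      then show ?thesis by (auto intro!: sum.neutral)
    qed
    finally show "D t = f t" by simp
  qed
  then show ?thesis using DI by simp
qed

lemma B_imp_D: "kp_laurent_iso (R::'r::comm_ring_1 itself) G"
  unfolding kp_laurent_iso_def
proof (intro exI[of _ phi] conjI ballI allI)
  show "phi ` fa_carrier R G = lsum_carrier R G"
    using phi_carrier phi_surj by blast
  fix f assume f: "f \<in> fa_carrier R G"
  show "phi f = 0 \<longleftrightarrow> f \<in> kp_ideal R G" using phi_kernel[OF f] phi_ideal by blast
  fix cc show "phi (\<lambda>w. cc * f w) = (\<lambda>v m. cc * phi f v m)" by (rule phi_smult[OF f])
next
  fix f g assume f: "f \<in> fa_carrier R G" and g: "g \<in> fa_carrier R G"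
  show "phi (f + g) = phi f + phi g" by (rule phi_add[OF f g])
  show "phi (fa_mult f g) = lsum_mult (phi f) (phi g)" by (rule phi_mult[OF f g])
qed

end

theorem proposition5p3:
  fixes G :: "('a, 'k::finite) kgraph"
  assumes "is_kgraph G" and "row_finite G" and "no_sources G"
    and "(1::'r::comm_ring_1) \<noteq> 0"
  shows "(kp_commutative TYPE('r) G \<longleftrightarrow>
            ((\<forall>x\<in>paths G. rng G x = src G x) \<and>
             (\<forall>n. inj_on (rng G) {x \<in> paths G. deg G x = n}))) \<and>
         (((\<forall>x\<in>paths G. rng G x = src G x) \<and>
             (\<forall>n. inj_on (rng G) {x \<in> paths G. deg G x = n})) \<longleftrightarrow>
            kg_iso G (disj_union_Nk (vertices G))) \<and>
         (kg_iso G (disj_union_Nk (vertices G)) \<longleftrightarrow> kp_laurent_iso TYPE('r) G)"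
proof -
  interpret kg G by (rule kg.intro[OF assms(1)])
  have fin: "finite (UNIV :: 'k set)" by simp
  have AB: "kp_commutative TYPE('r) G \<Longrightarrow>
      (\<forall>x\<in>paths G. rng G x = src G x) \<and> (\<forall>n. inj_on (rng G) {x \<in> paths G. deg G x = n})"
    using comm_imp_B[OF assms(2,3) fin assms(4)] by blast
  have BD: "kp_laurent_iso TYPE('r) G"
    if b: "(\<forall>x\<in>paths G. rng G x = src G x) \<and> (\<forall>n. inj_on (rng G) {x \<in> paths G. deg G x = n})"
  proof -
    interpret kgB G
      by (rule kgB.intro[OF kg.intro[OF assms(1)]], rule kgB_axioms.intro) (use b assms(3) in auto)
    show ?thesis by (rule B_imp_D)
  qed
  have DA: "kp_laurent_iso TYPE('r) G \<Longrightarrow> kp_commutative TYPE('r) G"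
    by (rule D_imp_A[OF assms(1)])
  have BC: "(\<forall>x\<in>paths G. rng G x = src G x) \<and> (\<forall>n. inj_on (rng G) {x \<in> paths G. deg G x = n}) \<Longrightarrow>
      kg_iso G (disj_union_Nk (vertices G))"
    using B_imp_C assms(3) by blast
  have CB: "kg_iso G (disj_union_Nk (vertices G)) \<Longrightarrow>
      (\<forall>x\<in>paths G. rng G x = src G x) \<and> (\<forall>n. inj_on (rng G) {x \<in> paths G. deg G x = n})"
    by (rule C_imp_B)
  show ?thesis using AB BD DA BC CB by blast
qed


end
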